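(* With notation as in the context, the $*$-homomorphism $\pi\colon\mathcal B\to\mathfrak R=\prod_{W\in\mathcal V}M_{|W|}(K)$, $\pi(b)=(h_Wb)_W$, is injective. Moreover, the ideal $\bigoplus_{W\in\mathcal V}h_W\mathcal B$ is essential in $\mathcal B$ and coincides with the socle of $\mathcal B$: $$\mathrm{soc}(\mathcal B)=\bigoplus_{W\in\mathcal V}\mathcal B\chi_W\mathcal B\cong\bigoplus_{W\in\mathcal V}M_{|W|}(K).$$
   Context: Let $X$ be an infinite, totally disconnected, compact metrizable space, $T$ a homeomorphism of $X$, $\mu$ a full (positive on nonempty open sets), ergodic, $T$-invariant Borel probability measure, $K$ a field with involution, $C_K(X)$ the $*$-algebra of locally constant functions $X\to K$, and $\mathcal A=C_K(X)\rtimes_T\mathbb Z$ the algebraic crossed product (finite sums $\sum f_it^i$, $tf=(f\circ T^{-1})t$, $(ft^i)^*=t^{-i}f^*$). Let $E$ be a nonempty clopen set, $\mathcal P$ a partition of $X\setminus E$ (finite family of nonempty pairwise disjoint clopen sets with union $X\setminus E$), and $\mathcal B$ the unital $*$-subalgebra of $\mathcal A$ generated by $\{\chi_Zt:Z\in\mathcal P\}$. $\mathcal V$ is the set of nonempty sets $W=E\cap T^{-1}(Z_1)\cap\cdots\cap T^{-k+1}(Z_{k-1})\cap T^{-k}(E)$ ($k\ge1$, $Z_i\in\mathcal P$), $|W|=k$. Put $s=\chi_{X\setminus E}t$, $e_{ij}(W)=s^i\chi_W(s^* )^j$ ($0\le i,j\le|W|-1$) and $h_W=\sum_{l=0}^{|W|-1}\chi_{T^l(W)}$;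 $h_W$ is a central projection of $\mathcal B$ and $h_W\mathcal B$ is identified with $M_{|W|}(K)$ (conjugate-transpose involution) via the $*$-isomorphism $e_{ij}(W)\mapsto e_{ij}$. The socle $\mathrm{soc}(\mathcal B)$ is the sum of all minimal one-sided ideals of $\mathcal B$. *)

theory Defs
  imports "HOL-Probability.Probability"
begin

definition totally_disconnected_space :: "'x::topological_space itself \<Rightarrow> bool" where
  "totally_disconnected_space _ \<longleftrightarrow> (\<forall>x::'x. connected_component_set UNIV x = {x})"

definition clopen_set :: "'x::topological_space set \<Rightarrow> bool" where
  "clopen_set S \<longleftrightarrow> open S \<and> closed S"

definition is_homeo :: "('x::topological_space \<Rightarrow> 'x) \<Rightarrow> bool" where
  "is_homeo T \<longleftrightarrow> bij T \<and> continuous_on UNIV T \<and> continuous_on UNIV (inv T)"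

definition tpow :: "('x \<Rightarrow> 'x) \<Rightarrow> int \<Rightarrow> 'x \<Rightarrow> 'x" where
  "tpow T n = (if 0 \<le> n then T ^^ nat n else inv T ^^ nat (- n))"

definition full_measure :: "'x::topological_space measure \<Rightarrow> bool" where
  "full_measure \<mu> \<longleftrightarrow> (\<forall>U. open U \<and> U \<noteq> {} \<longrightarrow> measure \<mu> U > 0)"

definition invariant_measure :: "('x \<Rightarrow> 'x) \<Rightarrow> 'x measure \<Rightarrow> bool" where
  "invariant_measure T \<mu> \<longleftrightarrow> T \<in> \<mu> \<rightarrow>\<^sub>M \<mu> \<and>
     (\<forall>A\<in>sets \<mu>. measure \<mu> (T -` A) = measure \<mu> A)"

definition ergodic_measure :: "('x \<Rightarrow> 'x) \<Rightarrow> 'x measure \<Rightarrow> bool" where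
  "ergodic_measure T \<mu> \<longleftrightarrow>
     (\<forall>A\<in>sets \<mu>. T -` A = A \<longrightarrow> measure \<mu> A = 0 \<or> measure \<mu> A = 1)"

definition field_involution :: "('k::field \<Rightarrow> 'k) \<Rightarrow> bool" where
  "field_involution \<sigma> \<longleftrightarrow> (\<forall>a b. \<sigma> (a + b) = \<sigma> a + \<sigma> b) \<and>
     (\<forall>a b. \<sigma> (a * b) = \<sigma> a * \<sigma> b) \<and> (\<forall>a. \<sigma> (\<sigma> a) = a)"

text \<open>An element \<open>\<Sum> f_i t^i\<close> is represented by its coefficient function
  \<open>a :: int \<Rightarrow> 'x \<Rightarrow> 'k\<close>, \<open>a i = f_i\<close>.\<close>

type_synonym ('x, 'k) cp = "int \<Rightarrow> 'x \<Rightarrow> 'k"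

definition locally_constant :: "('x::topological_space \<Rightarrow> 'k) \<Rightarrow> bool" where
  "locally_constant f \<longleftrightarrow> (\<forall>x. \<exists>U. open U \<and> x \<in> U \<and> (\<forall>y\<in>U. f y = f x))"

definition cp_carrier :: "('x::topological_space, 'k::zero) cp set" where
  "cp_carrier = {a. finite {i. a i \<noteq> (\<lambda>_. 0)} \<and> (\<forall>i. locally_constant (a i))}"

definition cp_zero :: "('x, 'k::zero) cp" where
  "cp_zero = (\<lambda>_ _. 0)"

definition cp_one :: "('x, 'k::{zero,one}) cp" where
  "cp_one = (\<lambda>n _. if n = 0 then 1 else 0)"

definition cp_add :: "('x, 'k::plus) cp \<Rightarrow> ('x, 'k) cp \<Rightarrow> ('x, 'k) cp" where
  "cp_add a b = (\<lambda>n x. a n x + b n x)"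

definition cp_smult :: "'k::times \<Rightarrow> ('x, 'k) cp \<Rightarrow> ('x, 'k) cp" where
  "cp_smult c a = (\<lambda>n x. c * a n x)"

text \<open>\<open>(f t^i)(g t^j) = f (g \<circ> T^{-i}) t^{i+j}\<close>.\<close>
definition cp_mult :: "('x \<Rightarrow> 'x) \<Rightarrow> ('x, 'k::comm_ring_1) cp \<Rightarrow> ('x, 'k) cp \<Rightarrow> ('x, 'k) cp" where
  "cp_mult T a b = (\<lambda>n x. \<Sum>i\<in>{i. a i \<noteq> (\<lambda>_. 0)}. a i x * b (n - i) (tpow T (- i) x))"

text \<open>\<open>(f t^i)^* = t^{-i} f^* = (f^* \<circ> T^i) t^{-i}\<close>.\<close>
definition cp_star :: "('k \<Rightarrow> 'k) \<Rightarrow> ('x \<Rightarrow> 'x) \<Rightarrow> ('x, 'k) cp \<Rightarrow> ('x, 'k) cp" where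
  "cp_star \<sigma> T a = (\<lambda>n x. \<sigma> (a (- n) (tpow T (- n) x)))"

definition cp_chi :: "'x set \<Rightarrow> ('x, 'k::{zero,one}) cp" where
  "cp_chi Z = (\<lambda>n x. if n = 0 \<and> x \<in> Z then 1 else 0)"

definition cp_chit :: "'x set \<Rightarrow> ('x, 'k::{zero,one}) cp" where
  "cp_chit Z = (\<lambda>n x. if n = 1 \<and> x \<in> Z then 1 else 0)"

fun cp_pow :: "('x \<Rightarrow> 'x) \<Rightarrow> ('x, 'k::comm_ring_1) cp \<Rightarrow> nat \<Rightarrow> ('x, 'k) cp" where
  "cp_pow T a 0 = cp_one"
| "cp_pow T a (Suc n) = cp_mult T a (cp_pow T a n)"

definition is_partition :: "'x::topological_space set set \<Rightarrow> 'x set \<Rightarrow> bool" where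
  "is_partition P S \<longleftrightarrow> finite P \<and> (\<forall>Z\<in>P. Z \<noteq> {} \<and> clopen_set Z) \<and>
     (\<forall>Z1\<in>P. \<forall>Z2\<in>P. Z1 \<noteq> Z2 \<longrightarrow> Z1 \<inter> Z2 = {}) \<and> \<Union>P = S"

inductive_set subalgB :: "('k::comm_ring_1 \<Rightarrow> 'k) \<Rightarrow> ('x \<Rightarrow> 'x) \<Rightarrow> 'x set set \<Rightarrow> ('x, 'k) cp set"
  for \<sigma> T P where
  gen: "Z \<in> P \<Longrightarrow> cp_chit Z \<in> subalgB \<sigma> T P"
| one: "cp_one \<in> subalgB \<sigma> T P"
| add: "a \<in> subalgB \<sigma> T P \<Longrightarrow> b \<in> subalgB \<sigma> T P \<Longrightarrow> cp_add a b \<in> subalgB \<sigma> T P"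
| smult: "a \<in> subalgB \<sigma> T P \<Longrightarrow> cp_smult c a \<in> subalgB \<sigma> T P"
| mult: "a \<in> subalgB \<sigma> T P \<Longrightarrow> b \<in> subalgB \<sigma> T P \<Longrightarrow> cp_mult T a b \<in> subalgB \<sigma> T P"
| star: "a \<in> subalgB \<sigma> T P \<Longrightarrow> cp_star \<sigma> T a \<in> subalgB \<sigma> T P"

text \<open>\<open>W(Zs) = E \<inter> T^{-1}(Z_1) \<inter> \<dots> \<inter> T^{-k+1}(Z_{k-1}) \<inter> T^{-k}(E)\<close> where
  \<open>Zs = [Z_1,\<dots>,Z_{k-1}]\<close> and \<open>k = length Zs + 1\<close>.\<close>
definition Wset :: "('x \<Rightarrow> 'x) \<Rightarrow> 'x set \<Rightarrow> 'x set list \<Rightarrow> 'x set" where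
  "Wset T E Zs = {x. x \<in> E \<and> (\<forall>i<length Zs. (T ^^ Suc i) x \<in> Zs ! i) \<and>
                      (T ^^ Suc (length Zs)) x \<in> E}"

definition Vsets :: "('x \<Rightarrow> 'x) \<Rightarrow> 'x set \<Rightarrow> 'x set set \<Rightarrow> 'x set set" where
  "Vsets T E P = {W. W \<noteq> {} \<and> (\<exists>Zs. set Zs \<subseteq> P \<and> W = Wset T E Zs)}"

definition Wlen :: "('x \<Rightarrow> 'x) \<Rightarrow> 'x set \<Rightarrow> 'x set set \<Rightarrow> 'x set \<Rightarrow> nat" where
  "Wlen T E P W = (LEAST k. \<exists>Zs. set Zs \<subseteq> P \<and> W = Wset T E Zs \<and> k = Suc (length Zs))"

definition hW :: "('x \<Rightarrow> 'x) \<Rightarrow> 'x set \<Rightarrow> 'x set set \<Rightarrow> 'x set \<Rightarrow> ('x, 'k::{comm_ring_1}) cp" where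
  "hW T E P W = (\<lambda>n x. \<Sum>l<Wlen T E P W. cp_chi ((T ^^ l) ` W) n x)"

inductive_set add_closure :: "('x, 'k::comm_ring_1) cp set \<Rightarrow> ('x, 'k) cp set" for S where
  zero: "cp_zero \<in> add_closure S"
| step: "a \<in> add_closure S \<Longrightarrow> s \<in> S \<Longrightarrow> cp_add a s \<in> add_closure S"

definition add_subgroup :: "('x, 'k::comm_ring_1) cp set \<Rightarrow> bool" where
  "add_subgroup I \<longleftrightarrow> cp_zero \<in> I \<and> (\<forall>a\<in>I. \<forall>b\<in>I. cp_add a b \<in> I) \<and>
     (\<forall>a\<in>I. cp_smult (-1) a \<in> I)"

definition left_ideal :: "('x \<Rightarrow> 'x) \<Rightarrow> ('x, 'k::comm_ring_1) cp set \<Rightarrow> ('x, 'k) cp set \<Rightarrow> bool" where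
  "left_ideal T R I \<longleftrightarrow> I \<subseteq> R \<and> add_subgroup I \<and> (\<forall>r\<in>R. \<forall>a\<in>I. cp_mult T r a \<in> I)"

definition right_ideal :: "('x \<Rightarrow> 'x) \<Rightarrow> ('x, 'k::comm_ring_1) cp set \<Rightarrow> ('x, 'k) cp set \<Rightarrow> bool" where
  "right_ideal T R I \<longleftrightarrow> I \<subseteq> R \<and> add_subgroup I \<and> (\<forall>r\<in>R. \<forall>a\<in>I. cp_mult T a r \<in> I)"

definition two_sided_ideal :: "('x \<Rightarrow> 'x) \<Rightarrow> ('x, 'k::comm_ring_1) cp set \<Rightarrow> ('x, 'k) cp set \<Rightarrow> bool" where
  "two_sided_ideal T R I \<longleftrightarrow> left_ideal T R I \<and> right_ideal T R I"

definition minimal_left_ideal :: "('x \<Rightarrow> 'x) \<Rightarrow> ('x, 'k::comm_ring_1) cp set \<Rightarrow> ('x, 'k) cp set \<Rightarrow> bool" where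
  "minimal_left_ideal T R I \<longleftrightarrow> left_ideal T R I \<and> I \<noteq> {cp_zero} \<and>
     (\<forall>J. left_ideal T R J \<and> J \<subseteq> I \<longrightarrow> J = {cp_zero} \<or> J = I)"

definition minimal_right_ideal :: "('x \<Rightarrow> 'x) \<Rightarrow> ('x, 'k::comm_ring_1) cp set \<Rightarrow> ('x, 'k) cp set \<Rightarrow> bool" where
  "minimal_right_ideal T R I \<longleftrightarrow> right_ideal T R I \<and> I \<noteq> {cp_zero} \<and>
     (\<forall>J. right_ideal T R J \<and> J \<subseteq> I \<longrightarrow> J = {cp_zero} \<or> J = I)"

definition socle :: "('x \<Rightarrow> 'x) \<Rightarrow> ('x, 'k::comm_ring_1) cp set \<Rightarrow> ('x, 'k) cp set" where
  "socle T R = add_closure (\<Union>{I. minimal_left_ideal T R I \<or> minimal_right_ideal T R I})"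

definition essential_ideal :: "('x \<Rightarrow> 'x) \<Rightarrow> ('x, 'k::comm_ring_1) cp set \<Rightarrow> ('x, 'k) cp set \<Rightarrow> bool" where
  "essential_ideal T R I \<longleftrightarrow> two_sided_ideal T R I \<and>
     (\<forall>J. two_sided_ideal T R J \<and> J \<noteq> {cp_zero} \<longrightarrow> I \<inter> J \<noteq> {cp_zero})"

end

theory Submission
  imports Defs
begin


lemma tpow_nat: "tpow T (int n) = T ^^ n"
  by (simp add: tpow_def)

lemma tpow_0[simp]: "tpow T 0 = id"
  by (simp add: tpow_def)

lemma tpow_negnat: "tpow T (- int n) = inv T ^^ n"
  by (auto simp: tpow_def)

lemma tpow_succ:
  assumes "bij T" shows "tpow T (n + 1) x = T (tpow T n x)"
proof (cases "0 \<le> n")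
  case True
  then have "nat (n+1) = Suc (nat n)" by simp
  then show ?thesis using True by (simp add: tpow_def)
next
  case False
  have n1: "n = - int (nat (-n))" using False by simp
  have "nat (-n) > 0" using False by simp
  then obtain m where "nat (-n) = Suc m" using gr0_conv_Suc by blast
  then have m: "n = - int (Suc m)" using n1 by simp
  have "tpow T n x = inv T ((inv T ^^ m) x)" using m by (simp add: tpow_negnat[of T "Suc m", simplified])
  moreover have "tpow T (n+1) x = (inv T ^^ m) x" using m tpow_negnat[of T m] by simp
  ultimately show ?thesis using assms by (simp add: bij_is_surj surj_f_inv_f)
qed

lemma tpow_pred:
  assumes "bij T" shows "tpow T (n - 1) x = inv T (tpow T n x)"
proof -
  have "tpow T n x = T (tpow T (n - 1) x)" using tpow_succ[OF assms, of "n-1" x] by simp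
  then show ?thesis using assms by (simp add: bij_is_inj inv_f_f)
qed

lemma tpow_add:
  assumes "bij T" shows "tpow T a (tpow T b x) = tpow T (a + b) x"
proof (induction a rule: int_induct[where k=0])
  case base then show ?case by simp
next
  case (step1 i)
  then show ?case using tpow_succ[OF assms] by (simp add: algebra_simps)
      (metis add.commute add.left_commute tpow_succ[OF assms])
next
  case (step2 i)
  then show ?case using tpow_pred[OF assms]
    by (metis add.commute add_diff_eq)
qed

lemma tpow_1: "tpow T 1 = T"
  using tpow_nat[of T 1] by simp

lemma tpow_m1: "tpow T (-1) = inv T"
  using tpow_negnat[of T 1] by simp

lemma cont_funpow: fixes f :: "'a::topological_space \<Rightarrow> 'a"
  shows "continuous_on UNIV f \<Longrightarrow> continuous_on UNIV (f ^^ n)"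
  apply (induction n)
   apply (simp add: continuous_on_id)
  apply (simp, metis continuous_on_compose2 subset_UNIV)
  done

lemma cont_tpow:
  assumes "continuous_on UNIV T" "continuous_on UNIV (inv T)"
  shows "continuous_on UNIV (tpow T n)"
  using assms by (simp add: tpow_def cont_funpow)

section \<open>Monomials and indicators\<close>

definition cpm :: "('x \<Rightarrow> 'k::zero) \<Rightarrow> int \<Rightarrow> ('x, 'k) cp" where
  "cpm f m = (\<lambda>n x. if n = m then f x else 0)"

definition ind :: "'x set \<Rightarrow> 'x \<Rightarrow> 'k::{zero,one}" where
  "ind A x = (if x \<in> A then 1 else 0)"

definition supp :: "('x, 'k::zero) cp \<Rightarrow> int set" where
  "supp a = {i. a i \<noteq> (\<lambda>_. 0)}"

lemma cp_mult_sup: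
  assumes "finite S" "supp a \<subseteq> S"
  shows "cp_mult T a b n x = (\<Sum>i\<in>S. a i x * b (n - i) (tpow T (- i) x))"
  unfolding cp_mult_def
  by (rule sum.mono_neutral_left[OF assms(1) assms(2)[unfolded supp_def]]) auto

lemma supp_cpm: "supp (cpm f m) \<subseteq> {m}"
  by (auto simp: supp_def cpm_def)

lemma cp_mult_cpm_left:
  "cp_mult T (cpm f i) c n x = f x * c (n - i) (tpow T (-i) x)"
  by (subst cp_mult_sup[of "{i}", OF _ supp_cpm]) (auto simp: cpm_def)

lemma cp_mult_cpm_right:
  assumes "finite (supp a)"
  shows "cp_mult T a (cpm g j) n x = a (n - j) x * g (tpow T (-(n-j)) x)"
proof -
  have "cp_mult T a (cpm g j) n x = (\<Sum>i\<in>supp a \<union> {n-j}. a i x * cpm g j (n - i) (tpow T (- i) x))"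
    using assms by (intro cp_mult_sup) auto
  also have "\<dots> = (\<Sum>i\<in>supp a \<union> {n-j}. if i = n - j then a i x * g (tpow T (- i) x) else 0)"
    by (intro sum.cong) (auto simp: cpm_def)
  also have "\<dots> = a (n - j) x * g (tpow T (-(n-j)) x)"
    using assms by (subst sum.delta) auto
  finally show ?thesis .
qed

lemma cpm_mult:
  "cp_mult T (cpm f i) (cpm g j) = cpm (\<lambda>x. f x * g (tpow T (-i) x)) (i + j)"
  unfolding fun_eq_iff cp_mult_cpm_left by (auto simp: cpm_def)

lemma cpm_star:
  assumes "\<sigma> 0 = 0"
  shows "cp_star \<sigma> T (cpm f i) = cpm (\<lambda>x. \<sigma> (f (tpow T i x))) (-i)"
  using assms by (auto simp: cp_star_def cpm_def fun_eq_iff)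

lemma cp_chi_cpm: "cp_chi Z = cpm (ind Z) 0"
  by (auto simp: cp_chi_def cpm_def ind_def fun_eq_iff)

lemma cp_chit_cpm: "cp_chit Z = cpm (ind Z) 1"
  by (auto simp: cp_chit_def cpm_def ind_def fun_eq_iff)

lemma cp_one_cpm: "cp_one = cpm (\<lambda>_. 1) 0"
  by (auto simp: cp_one_def cpm_def fun_eq_iff)

lemma cp_zero_cpm: "cp_zero = cpm (\<lambda>_. 0) m"
  by (auto simp: cp_zero_def cpm_def fun_eq_iff)

lemma cpm_smult: "cp_smult c (cpm f m) = (cpm (\<lambda>x. c * f x) m :: ('x,'k::comm_ring_1) cp)"
  by (auto simp: cp_smult_def cpm_def fun_eq_iff)

lemma cpm_add: "cp_add (cpm f m) (cpm g m) = (cpm (\<lambda>x. f x + g x) m :: ('x,'k::comm_ring_1) cp)"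
  by (auto simp: cp_add_def cpm_def fun_eq_iff)

lemma cpm_cong: "(\<And>x. f x = g x) \<Longrightarrow> cpm f m = cpm g m"
  by (auto simp: cpm_def fun_eq_iff)

lemma ind_mult: "ind A x * ind B x = (ind (A \<inter> B) x :: 'k::{comm_ring_1})"
  by (auto simp: ind_def)

lemma cp_mult_zero_right: "cp_mult T a cp_zero = cp_zero"
  by (auto simp: cp_mult_def cp_zero_def fun_eq_iff)

lemma cp_mult_add_right: "cp_mult T a (cp_add b c) = cp_add (cp_mult T a b) (cp_mult T a c)"
  by (auto simp: cp_mult_def cp_add_def fun_eq_iff distrib_left sum.distrib)

lemma cp_mult_smult_right: "cp_mult T a (cp_smult c b) = cp_smult c (cp_mult T a b)"
  by (auto simp: cp_mult_def cp_smult_def fun_eq_iff sum_distrib_left algebra_simps)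

lemma cp_mult_add_left:
  assumes "finite (supp a)" "finite (supp b)"
  shows "cp_mult T (cp_add a b) c = cp_add (cp_mult T a c) (cp_mult T b c)"
proof (rule ext, rule ext)
  fix n x
  let ?S = "supp a \<union> supp b"
  have s: "supp (cp_add a b) \<subseteq> ?S" by (auto simp: supp_def cp_add_def fun_eq_iff)
  have "cp_mult T (cp_add a b) c n x = (\<Sum>i\<in>?S. cp_add a b i x * c (n - i) (tpow T (- i) x))"
    by (rule cp_mult_sup) (use assms s in auto)
  also have "\<dots> = (\<Sum>i\<in>?S. a i x * c (n - i) (tpow T (- i) x)) + (\<Sum>i\<in>?S. b i x * c (n - i) (tpow T (- i) x))"
    by (simp add: cp_add_def sum.distrib[symmetric] distrib_right)
  also have "\<dots> = cp_mult T a c n x + cp_mult T b c n x"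
    by (subst (1 2) cp_mult_sup[of ?S]) (use assms in auto)
  finally show "cp_mult T (cp_add a b) c n x = cp_add (cp_mult T a c) (cp_mult T b c) n x"
    by (simp add: cp_add_def)
qed

lemma cp_mult_diag_assoc:
  assumes "finite (supp b)"
  shows "cp_mult T (cp_mult T (cpm f 0) b) r = cp_mult T (cpm f 0) (cp_mult T b r)"
proof (rule ext, rule ext)
  fix n x
  have s: "supp (cp_mult T (cpm f 0) b) \<subseteq> supp b"
    by (auto simp: supp_def cp_mult_cpm_left fun_eq_iff) (metis mult_zero_right)
  show "cp_mult T (cp_mult T (cpm f 0) b) r n x = cp_mult T (cpm f 0) (cp_mult T b r) n x"
    apply (subst cp_mult_sup[of "supp b"], use assms s in auto)
    apply (simp add: cp_mult_cpm_left)
    apply (subst cp_mult_sup[of "supp b" b], use assms in auto)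
    apply (simp add: sum_distrib_left mult.assoc)
    done
qed



section \<open>Locally constant functions\<close>

lemma lc_const: "locally_constant (\<lambda>_. c)"
  unfolding locally_constant_def by (intro allI exI[of _ UNIV]) auto

lemma lc_ind: assumes "clopen_set A" shows "locally_constant (ind A)"
  unfolding locally_constant_def
proof (intro allI)
  fix x
  show "\<exists>U. open U \<and> x \<in> U \<and> (\<forall>y\<in>U. ind A y = ind A x)"
  proof (cases "x \<in> A")
    case True thus ?thesis using assms by (intro exI[of _ A]) (auto simp: ind_def clopen_set_def)
  next
    case False thus ?thesis using assms
      by (intro exI[of _ "-A"]) (auto simp: ind_def clopen_set_def open_Compl)
  qed
qed

lemma lc_binop:
  assumes f: "locally_constant f" and g: "locally_constant g"
  shows "locally_constant (\<lambda>x. h (f x) (g x))"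
  unfolding locally_constant_def
proof (intro allI)
  fix x
  obtain U where U: "open U" "x \<in> U" "\<forall>y\<in>U. f y = f x" using f unfolding locally_constant_def by blast
  obtain V where V: "open V" "x \<in> V" "\<forall>y\<in>V. g y = g x" using g unfolding locally_constant_def by blast
  show "\<exists>U. open U \<and> x \<in> U \<and> (\<forall>y\<in>U. h (f y) (g y) = h (f x) (g x))"
  proof (intro exI[of _ "U \<inter> V"] conjI ballI)
    show "open (U \<inter> V)" using U V by blast
    show "x \<in> U \<inter> V" using U V by blast
    fix y assume y: "y \<in> U \<inter> V"
    have "f y = f x" using U(3) y by blast
    moreover have "g y = g x" using V(3) y by blast
    ultimately show "h (f y) (g y) = h (f x) (g x)" by simp
  qed
qed

lemma lc_left:
  assumes f: "locally_constant f"
  shows "locally_constant (\<lambda>x. h (f x))"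
  using lc_binop[OF f f, of "\<lambda>a b. h a"] by simp

lemma lc_right:
  assumes f: "locally_constant f" and g: "continuous_on UNIV g"
  shows "locally_constant (\<lambda>x. f (g x))"
  unfolding locally_constant_def
proof (intro allI)
  fix x
  obtain U where U: "open U" "g x \<in> U" "\<forall>y\<in>U. f y = f (g x)" using f unfolding locally_constant_def by blast
  show "\<exists>U. open U \<and> x \<in> U \<and> (\<forall>y\<in>U. f (g y) = f (g x))"
  proof (intro exI[of _ "g -` U"] conjI ballI)
    show "open (g -` U)" using U(1) g open_vimage by blast
    show "x \<in> g -` U" using U(2) by blast
    fix y assume "y \<in> g -` U"
    then show "f (g y) = f (g x)" using U(3) by blast
  qed
qed

lemma lc_sum:
  assumes "finite S" "\<And>i. i \<in> S \<Longrightarrow> locally_constant (f i)"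
  shows "locally_constant (\<lambda>x. \<Sum>i\<in>S. f i x)"
  using assms
proof (induction S rule: finite_induct)
  case empty then show ?case by (simp add: lc_const)
next
  case (insert a F)
  then show ?case
    using lc_binop[of "f a" "\<lambda>x. \<Sum>i\<in>F. f i x" "(+)"] by simp
qed

locale setting =
  fixes T :: "'x::topological_space \<Rightarrow> 'x" and \<sigma> :: "'k::field \<Rightarrow> 'k"
    and E :: "'x set" and P :: "'x set set"
  assumes bijT: "bij T" and contT: "continuous_on UNIV T" and contiT: "continuous_on UNIV (inv T)"
    and invol: "field_involution \<sigma>" and clE: "clopen_set E" and part: "is_partition P (UNIV - E)"
begin

abbreviation "B \<equiv> subalgB \<sigma> T P"

lemma sigma0: "\<sigma> 0 = 0"
proof -
  have "\<sigma> (0 + 0) = \<sigma> 0 + \<sigma> 0" using invol by (simp only: field_involution_def)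
  then have "\<sigma> 0 = \<sigma> 0 + \<sigma> 0" by simp
  then show ?thesis by (metis add_cancel_right_right)
qed

lemma sigma_inj: "\<sigma> a = \<sigma> b \<Longrightarrow> a = b"
  using invol by (metis field_involution_def)

lemma sigma_eq0: "\<sigma> a = 0 \<longleftrightarrow> a = 0"
  using sigma_inj sigma0 by metis

lemma sigma1: "\<sigma> 1 = 1"
proof -
  have m: "\<sigma> 1 = \<sigma> 1 * \<sigma> 1" using invol by (metis field_involution_def mult_1)
  have "\<sigma> 1 \<noteq> 0" using sigma_eq0 by simp
  then show ?thesis using m by (metis mult_cancel_left2)
qed

lemma tp: "tpow T a (tpow T b x) = tpow T (a + b) x"
  using tpow_add[OF bijT] .

lemma cont_tp: "continuous_on UNIV (tpow T n)"
  using cont_tpow[OF contT contiT] .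

lemma T_inv_T[simp]: "T (inv T x) = x" "inv T (T x) = x"
  using bijT by (auto simp: bij_is_surj surj_f_inv_f bij_is_inj inv_f_f)

lemma P_clopen: "Z \<in> P \<Longrightarrow> clopen_set Z"
  using part by (auto simp: is_partition_def)

lemma P_E: "Z \<in> P \<Longrightarrow> x \<in> Z \<Longrightarrow> x \<notin> E"
  using part by (auto simp: is_partition_def)

lemma P_cover: "x \<notin> E \<Longrightarrow> \<exists>Z\<in>P. x \<in> Z"
  using part by (auto simp: is_partition_def)

lemma P_disj: "Z1 \<in> P \<Longrightarrow> Z2 \<in> P \<Longrightarrow> Z1 \<noteq> Z2 \<Longrightarrow> x \<in> Z1 \<Longrightarrow> x \<notin> Z2"
  using part by (auto simp: is_partition_def)

lemma P_finite: "finite P"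
  using part by (auto simp: is_partition_def)

lemma carrier_iff: "a \<in> cp_carrier \<longleftrightarrow> finite (supp a) \<and> (\<forall>i. locally_constant (a i))"
  by (simp add: cp_carrier_def supp_def)

lemma carrier_mult:
  fixes a b :: "('x,'k) cp"
  assumes a: "a \<in> cp_carrier" and b: "b \<in> cp_carrier"
  shows "cp_mult T a b \<in> cp_carrier"
proof -
  have fa: "finite (supp a)" and fb: "finite (supp b)" using a b carrier_iff by auto
  have "supp (cp_mult T a b) \<subseteq> (\<lambda>(i,j). i + j) ` (supp a \<times> supp b)"
  proof
    fix n assume n: "n \<in> supp (cp_mult T a b)"
    show "n \<in> (\<lambda>(i,j). i + j) ` (supp a \<times> supp b)"
    proof (rule ccontr)
      assume nn: "n \<notin> (\<lambda>(i,j). i + j) ` (supp a \<times> supp b)"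
      have "\<And>i. i \<in> supp a \<Longrightarrow> b (n - i) = (\<lambda>_. 0)"
      proof -
        fix i assume "i \<in> supp a"
        have "n = (\<lambda>(i,j). i + j) (i, n - i)" by simp
        then have "n - i \<notin> supp b" using nn \<open>i \<in> supp a\<close> by blast
        then show "b (n - i) = (\<lambda>_. 0)" by (simp add: supp_def)
      qed
      then have "cp_mult T a b n = (\<lambda>_. 0)"
        by (auto simp: cp_mult_def fun_eq_iff supp_def intro!: sum.neutral)
      then show False using n by (simp add: supp_def)
    qed
  qed
  then have "finite (supp (cp_mult T a b))"
    using fa fb by (meson finite_SigmaI finite_imageI finite_subset)
  moreover have "locally_constant (cp_mult T a b n)" for n
  proof -
    have "cp_mult T a b n = (\<lambda>x. \<Sum>i\<in>supp a. a i x * b (n - i) (tpow T (- i) x))"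
      by (simp add: cp_mult_def supp_def fun_eq_iff)
    moreover have "locally_constant (\<lambda>x. \<Sum>i\<in>supp a. a i x * b (n - i) (tpow T (- i) x))"
    proof (rule lc_sum[OF fa])
      fix i
      have l1: "locally_constant (a i)" using a by (simp add: carrier_iff)
      have "locally_constant (b (n - i))" using b by (simp add: carrier_iff)
      then have l2: "locally_constant (\<lambda>x. b (n - i) (tpow T (- i) x))"
        using lc_right cont_tp by blast
      show "locally_constant (\<lambda>x. a i x * b (n - i) (tpow T (- i) x))"
        using lc_binop[OF l1 l2, of "(*)"] by simp
    qed
    ultimately show ?thesis by simp
  qed
  ultimately show ?thesis by (simp add: carrier_iff)
qed

lemma carrier_star:
  fixes a :: "('x,'k) cp"
  assumes a: "a \<in> cp_carrier"
  shows "cp_star \<sigma> T a \<in> cp_carrier"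
proof -
  have fa: "finite (supp a)" using a carrier_iff by auto
  have "supp (cp_star \<sigma> T a) \<subseteq> uminus ` supp a"
  proof
    fix n assume "n \<in> supp (cp_star \<sigma> T a)"
    then obtain x where "\<sigma> (a (- n) (tpow T (- n) x)) \<noteq> 0" by (auto simp: supp_def cp_star_def fun_eq_iff)
    then have "a (- n) (tpow T (- n) x) \<noteq> 0" using sigma0 by metis
    then have "-n \<in> supp a" by (auto simp: supp_def fun_eq_iff)
    then show "n \<in> uminus ` supp a" by (intro image_eqI[of _ _ "-n"]) auto
  qed
  then have "finite (supp (cp_star \<sigma> T a))" using fa finite_subset by blast
  moreover have "locally_constant (cp_star \<sigma> T a n)" for n
    unfolding cp_star_def
    by (rule lc_left[where h=\<sigma>], rule lc_right) (use a cont_tp in \<open>auto simp: carrier_iff\<close>)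
  ultimately show ?thesis by (simp add: carrier_iff)
qed

lemma carrier_add:
  fixes a b :: "('x,'k) cp"
  assumes a: "a \<in> cp_carrier" and b: "b \<in> cp_carrier"
  shows "cp_add a b \<in> cp_carrier"
proof -
  have "supp (cp_add a b) \<subseteq> supp a \<union> supp b"
  proof
    fix n assume n: "n \<in> supp (cp_add a b)"
    show "n \<in> supp a \<union> supp b"
    proof (rule ccontr)
      assume "n \<notin> supp a \<union> supp b"
      then have "a n = (\<lambda>_. 0)" "b n = (\<lambda>_. 0)" by (auto simp: supp_def)
      then have "cp_add a b n = (\<lambda>_. 0)" by (simp add: cp_add_def)
      then show False using n by (simp add: supp_def)
    qed
  qed
  then show ?thesis using a b unfolding carrier_iff cp_add_def
    by (auto intro: finite_subset lc_binop[where h="(+)"])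
qed

lemma carrier_smult:
  fixes a :: "('x,'k) cp"
  assumes a: "a \<in> cp_carrier"
  shows "cp_smult c a \<in> cp_carrier"
proof -
  have "supp (cp_smult c a) \<subseteq> supp a"
  proof
    fix n assume n: "n \<in> supp (cp_smult c a)"
    show "n \<in> supp a"
    proof (rule ccontr)
      assume "n \<notin> supp a"
      then have "a n = (\<lambda>_. 0)" by (auto simp: supp_def)
      then have "cp_smult c a n = (\<lambda>_. 0)" by (simp add: cp_smult_def)
      then show False using n by (simp add: supp_def)
    qed
  qed
  then show ?thesis using a unfolding carrier_iff cp_smult_def
    by (auto intro: finite_subset lc_left[where h="(*) c"])
qed

lemma carrier_cpm:
  fixes f :: "'x \<Rightarrow> 'k"
  assumes "locally_constant f" shows "cpm f m \<in> cp_carrier"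
proof -
  have "finite (supp (cpm f m))" using supp_cpm finite_subset by (metis finite.emptyI finite.insertI)
  moreover have "locally_constant (cpm f m n)" for n
    using assms by (cases "n = m") (auto simp: cpm_def lc_const)
  ultimately show ?thesis by (simp add: carrier_iff)
qed

lemma B_carrier: "b \<in> B \<Longrightarrow> b \<in> cp_carrier"
proof (induction rule: subalgB.induct)
  case (gen Z) then show ?case
    by (simp add: cp_chit_cpm carrier_cpm lc_ind P_clopen)
next
  case one then show ?case by (simp add: cp_one_cpm carrier_cpm lc_const)
next
  case (add a b) then show ?case by (simp add: carrier_add)
next
  case (smult a c) then show ?case by (simp add: carrier_smult)
next
  case (mult a b) then show ?case by (simp add: carrier_mult)
next
  case (star a) then show ?case by (simp add: carrier_star)
qed

lemma B_fin: "b \<in> B \<Longrightarrow> finite (supp b)"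
  using B_carrier carrier_iff by blast

lemma B_zero: "cp_zero \<in> B"
proof -
  have "cp_smult 0 cp_one \<in> B" by (intro subalgB.smult subalgB.one)
  moreover have "cp_smult 0 cp_one = (cp_zero :: ('x,'k) cp)"
    by (simp add: cp_smult_def cp_zero_def fun_eq_iff)
  ultimately show ?thesis by simp
qed

end


context setting begin

definition Wpath :: "'x set \<Rightarrow> nat \<Rightarrow> bool" where
  "Wpath W k \<longleftrightarrow> W \<noteq> {} \<and> 0 < k \<and>
     (\<forall>w\<in>W. w \<in> E \<and> (T^^k) w \<in> E \<and> (\<forall>j. 0 < j \<and> j < k \<longrightarrow> (T^^j) w \<notin> E)) \<and>
     (\<forall>j Z. 0 < j \<and> j < k \<and> Z \<in> P \<longrightarrow> (\<forall>w\<in>W. (T^^j) w \<in> Z) \<or> (\<forall>w\<in>W. (T^^j) w \<notin> Z))"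

definition DW :: "'x set \<Rightarrow> nat \<Rightarrow> 'x set" where
  "DW W k = (\<Union>l<k. (T^^l) ` W)"

lemma inj_Tn: "inj (T^^n)"
  using bijT bij_is_inj inj_fn by blast

lemma tp_fun: "0 \<le> n + int j \<Longrightarrow> tpow T n ((T^^j) w) = (T^^nat (n + int j)) w"
proof -
  assume h: "0 \<le> n + int j"
  obtain m :: nat where m: "n + int j = int m" using h by (metis nonneg_eq_int)
  have "tpow T n ((T^^j) w) = tpow T n (tpow T (int j) w)" by (simp add: tpow_nat)
  also have "\<dots> = tpow T (n + int j) w" by (simp add: tp)
  also have "\<dots> = (T^^m) w" by (simp only: m tpow_nat)
  finally show ?thesis using m by simp
qed

lemma seg_unique:
  assumes W: "Wpath W k" and w: "w \<in> W" "w' \<in> W" and pq: "p < k" "q < k"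
    and eq: "(T^^p) w = (T^^q) w'"
  shows "p = q \<and> w = w'"
proof -
  have aux: "False" if "w1 \<in> W" "w2 \<in> W" "p1 < q1" "q1 < k" "(T^^p1) w1 = (T^^q1) w2" for w1 w2 p1 q1
  proof -
    have "(T^^q1) w2 = (T^^p1) ((T^^(q1 - p1)) w2)"
      using that(3) by (metis funpow_add le_add_diff_inverse less_imp_le o_apply)
    then have "w1 = (T^^(q1 - p1)) w2" using that(5) inj_Tn by (metis injD)
    moreover have "(T^^(q1 - p1)) w2 \<notin> E" using W that by (auto simp: Wpath_def)
    moreover have "w1 \<in> E" using W that by (auto simp: Wpath_def)
    ultimately show False by simp
  qed
  have "p = q"
  proof (rule ccontr)
    assume "p \<noteq> q"
    then consider "p < q" | "q < p" by linarith
    then show False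
    proof cases
      case 1 show False by (rule aux[OF w(1) w(2) 1 pq(2) eq])
    next
      case 2 show False by (rule aux[OF w(2) w(1) 2 pq(1) eq[symmetric]])
    qed
  qed
  moreover then have "w = w'" using eq inj_Tn by (metis injD)
  ultimately show ?thesis by simp
qed

definition Inv2 :: "'x set \<Rightarrow> nat \<Rightarrow> ('x,'k) cp \<Rightarrow> bool" where
  "Inv2 W k b \<longleftrightarrow> (\<forall>n x w j. b n x \<noteq> 0 \<longrightarrow> w \<in> W \<longrightarrow> j < k \<longrightarrow>
     (x = (T^^j) w \<longrightarrow> 0 \<le> int j - n \<and> int j - n < int k) \<and>
     (tpow T (-n) x = (T^^j) w \<longrightarrow> 0 \<le> int j + n \<and> int j + n < int k))"

definition Inv3 :: "'x set \<Rightarrow> nat \<Rightarrow> ('x,'k) cp \<Rightarrow> bool" where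
  "Inv3 W k b \<longleftrightarrow> (\<forall>j m w w'. j < k \<longrightarrow> m < k \<longrightarrow> w \<in> W \<longrightarrow> w' \<in> W \<longrightarrow>
     b (int j - int m) ((T^^j) w) = b (int j - int m) ((T^^j) w'))"

lemma Inv2D1: "Inv2 W k b \<Longrightarrow> b n ((T^^j) w) \<noteq> 0 \<Longrightarrow> w \<in> W \<Longrightarrow> j < k \<Longrightarrow>
    0 \<le> int j - n \<and> int j - n < int k"
  unfolding Inv2_def by blast

lemma Inv2D2: "Inv2 W k b \<Longrightarrow> b n x \<noteq> 0 \<Longrightarrow> w \<in> W \<Longrightarrow> j < k \<Longrightarrow> tpow T (-n) x = (T^^j) w \<Longrightarrow>
    0 \<le> int j + n \<and> int j + n < int k"
  unfolding Inv2_def by blast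

lemma sum_nonzero_ex: "(\<Sum>i\<in>S. f i) \<noteq> (0::'a::comm_monoid_add) \<Longrightarrow> \<exists>i\<in>S. f i \<noteq> 0"
  by (meson sum.neutral)

lemma B_Inv2:
  assumes W: "Wpath W k"
  shows "b \<in> B \<Longrightarrow> Inv2 W k b"
proof (induction rule: subalgB.induct)
  case (gen Z)
  show ?case unfolding Inv2_def
  proof (intro allI impI conjI)
    fix n x w j
    assume nz: "cp_chit Z n x \<noteq> (0::'k)" and w: "w \<in> W" and j: "j < k"
    then have n1: "n = 1" and xZ: "x \<in> Z" by (auto simp: cp_chit_def split: if_splits)
    have xE: "x \<notin> E" using P_E gen xZ by blast
    have wE: "w \<in> E" "(T^^k) w \<in> E" using W w by (auto simp: Wpath_def)
    {
      assume xj: "x = (T^^j) w"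
      have "j \<noteq> 0"
      proof
        assume "j = 0" then have "x = w" using xj by simp
        then show False using xE wE by simp
      qed
      then show "0 \<le> int j - n" "int j - n < int k" using n1 j by auto
    }
    {
      assume h: "tpow T (-n) x = (T^^j) w"
      then have "inv T x = (T^^j) w" using n1 by (simp add: tpow_m1)
      then have "x = (T^^Suc j) w" by (metis T_inv_T(1) funpow.simps(2) o_apply)
      then have "Suc j \<noteq> k" using xE wE by auto
      then show "0 \<le> int j + n" "int j + n < int k" using n1 j by auto
    }
  qed
next
  case one
  show ?case unfolding Inv2_def
    by (auto simp: cp_one_def split: if_splits)
next
  case (add a b)
  then show ?case unfolding Inv2_def cp_add_def
    by (metis add.right_neutral add_0)
next
  case (smult a c)
  then show ?case unfolding Inv2_def cp_smult_def
    by (metis mult_zero_right)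
next
  case (mult a b)
  show ?case unfolding Inv2_def
  proof (intro allI impI conjI)
    fix n x w j
    assume nz: "cp_mult T a b n x \<noteq> 0" and w: "w \<in> W" and j: "j < k"
    obtain i where ai: "a i x \<noteq> 0" and bi: "b (n - i) (tpow T (- i) x) \<noteq> 0"
      using sum_nonzero_ex[OF nz[unfolded cp_mult_def]] by auto
    {
      assume x: "x = (T^^j) w"
      have r1: "0 \<le> int j - i \<and> int j - i < int k" using Inv2D1[OF mult.IH(1)] ai x w j by blast
      define l where "l = nat (int j - i)"
      have l: "int l = int j - i" "l < k" using r1 by (auto simp: l_def)
      have "tpow T (- i) x = (T^^l) w" using x r1 tp_fun[of "-i" j w] by (simp add: l_def)
      then have "0 \<le> int l - (n - i) \<and> int l - (n - i) < int k"
        using Inv2D1[OF mult.IH(2)] bi w l(2) by metis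
      then show "0 \<le> int j - n" "int j - n < int k" using l by auto
    }
    {
      assume x: "tpow T (- n) x = (T^^j) w"
      have e: "tpow T (- (n - i)) (tpow T (- i) x) = (T^^j) w" using x by (simp add: tp)
      have r1: "0 \<le> int j + (n - i) \<and> int j + (n - i) < int k"
        using Inv2D2[OF mult.IH(2) bi w j e] .
      define l where "l = nat (int j + (n - i))"
      have l: "int l = int j + (n - i)" "l < k" using r1 by (auto simp: l_def)
      have "tpow T (- i) x = tpow T (n - i) (tpow T (- n) x)" by (simp add: tp)
      also have "\<dots> = (T^^l) w" using x r1 tp_fun[of "n - i" j w] by (simp add: l_def add.commute)
      finally have "tpow T (- i) x = (T^^l) w" .
      then have "0 \<le> int l + i \<and> int l + i < int k"
        using Inv2D2[OF mult.IH(1) ai w l(2)] by blast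
      then show "0 \<le> int j + n" "int j + n < int k" using l by auto
    }
  qed
next
  case (star a)
  show ?case unfolding Inv2_def
  proof (intro allI impI conjI)
    fix n x w j
    assume nz: "cp_star \<sigma> T a n x \<noteq> 0" and w: "w \<in> W" and j: "j < k"
    then have ay: "a (- n) (tpow T (- n) x) \<noteq> 0"
      by (auto simp: cp_star_def sigma0)
    {
      assume x: "x = (T^^j) w"
      have "tpow T (- (- n)) (tpow T (- n) x) = (T^^j) w" using x by (simp add: tp)
      then have "0 \<le> int j + - n \<and> int j + - n < int k"
        using Inv2D2[OF star.IH ay w j] by blast
      then show "0 \<le> int j - n" "int j - n < int k" by auto
    }
    {
      assume x: "tpow T (- n) x = (T^^j) w"
      have "0 \<le> int j - - n \<and> int j - - n < int k"
        using Inv2D1[OF star.IH, of "-n" j w] ay x w j by simp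
      then show "0 \<le> int j + n" "int j + n < int k" by auto
    }
  qed
qed

lemma B_Inv3:
  assumes W: "Wpath W k"
  shows "b \<in> B \<Longrightarrow> Inv3 W k b"
proof (induction rule: subalgB.induct)
  case (gen Z)
  show ?case unfolding Inv3_def
  proof (intro allI impI)
    fix j m w w'
    assume j: "j < k" and m: "m < k" and w: "w \<in> W" and w': "w' \<in> W"
    show "cp_chit Z (int j - int m) ((T ^^ j) w) = (cp_chit Z (int j - int m) ((T ^^ j) w') :: 'k)"
    proof (cases "int j - int m = 1")
      case True
      then have "0 < j" by auto
      then have "(\<forall>w\<in>W. (T^^j) w \<in> Z) \<or> (\<forall>w\<in>W. (T^^j) w \<notin> Z)"
        using W j gen unfolding Wpath_def by blast
      then show ?thesis using w w' by (auto simp: cp_chit_def)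
    next
      case False
      then show ?thesis by (simp add: cp_chit_def)
    qed
  qed
next
  case one
  show ?case unfolding Inv3_def by (simp add: cp_one_def)
next
  case (add a b)
  show ?case unfolding Inv3_def
  proof (intro allI impI)
    fix j m w w'
    assume h: "j < k" "m < k" "w \<in> W" "w' \<in> W"
    have "a (int j - int m) ((T^^j) w) = a (int j - int m) ((T^^j) w')"
      using add.IH(1) h unfolding Inv3_def by blast
    moreover have "b (int j - int m) ((T^^j) w) = b (int j - int m) ((T^^j) w')"
      using add.IH(2) h unfolding Inv3_def by blast
    ultimately show "cp_add a b (int j - int m) ((T^^j) w) = cp_add a b (int j - int m) ((T^^j) w')"
      by (simp add: cp_add_def)
  qed
next
  case (smult a c)
  show ?case unfolding Inv3_def
  proof (intro allI impI)
    fix j m w w'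
    assume h: "j < k" "m < k" "w \<in> W" "w' \<in> W"
    have "a (int j - int m) ((T^^j) w) = a (int j - int m) ((T^^j) w')"
      using smult.IH h unfolding Inv3_def by blast
    then show "cp_smult c a (int j - int m) ((T^^j) w) = cp_smult c a (int j - int m) ((T^^j) w')"
      by (simp add: cp_smult_def)
  qed
next
  case (mult a b)
  have a2: "Inv2 W k a" using B_Inv2[OF W mult.hyps(1)] .
  show ?case unfolding Inv3_def
  proof (intro allI impI)
    fix j m w w'
    assume j: "j < k" and m: "m < k" and w: "w \<in> W" and w': "w' \<in> W"
    let ?F = "\<lambda>v i. a i ((T^^j) v) * b (int j - int m - i) (tpow T (- i) ((T^^j) v))"
    have "?F w i = ?F w' i" for i
    proof (cases "0 \<le> int j - i \<and> int j - i < int k")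
      case True
      define l where "l = nat (int j - i)"
      have l: "int l = int j - i" "l < k" using True by (auto simp: l_def)
      have i: "i = int j - int l" using l by simp
      have tv: "tpow T (- i) ((T^^j) v) = (T^^l) v" for v
        using True tp_fun[of "-i" j v] by (simp add: l_def)
      have e1: "a i ((T^^j) w) = a i ((T^^j) w')"
        using mult.IH(1) j l(2) w w' unfolding Inv3_def i by blast
      have e2: "b (int l - int m) ((T^^l) w) = b (int l - int m) ((T^^l) w')"
        using mult.IH(2) m l(2) w w' unfolding Inv3_def by blast
      have eqi: "int j - int m - i = int l - int m" using l by simp
      show ?thesis by (simp only: tv eqi e1 e2)
    next
      case False
      have "a i ((T^^j) v) = 0" if "v \<in> W" for v
        using Inv2D1[OF a2, of i j v] False that j by blast
      then show ?thesis using w w' by simp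
    qed
    then show "cp_mult T a b (int j - int m) ((T ^^ j) w) = cp_mult T a b (int j - int m) ((T ^^ j) w')"
      unfolding cp_mult_def by simp
  qed
next
  case (star a)
  show ?case unfolding Inv3_def
  proof (intro allI impI)
    fix j m w w'
    assume j: "j < k" and m: "m < k" and w: "w \<in> W" and w': "w' \<in> W"
    have tv: "tpow T (- (int j - int m)) ((T^^j) v) = (T^^m) v" for v
      using tp_fun[of "- (int j - int m)" j v] by simp
    have "a (int m - int j) ((T^^m) w) = a (int m - int j) ((T^^m) w')"
      using star.IH j m w w' unfolding Inv3_def by blast
    then show "cp_star \<sigma> T a (int j - int m) ((T ^^ j) w) = cp_star \<sigma> T a (int j - int m) ((T ^^ j) w')"
      unfolding cp_star_def using tv by simp
  qed
qed

lemma B_D: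
  assumes W: "Wpath W k" and b: "b \<in> B" and nz: "b n x \<noteq> 0"
  shows "x \<in> DW W k \<longleftrightarrow> tpow T (-n) x \<in> DW W k"
proof
  have I: "Inv2 W k b" using B_Inv2[OF W b] .
  {
    assume "x \<in> DW W k"
    then obtain j w where j: "j < k" and w: "w \<in> W" and x: "x = (T^^j) w" by (auto simp: DW_def)
    have r: "0 \<le> int j - n \<and> int j - n < int k" using Inv2D1[OF I] nz x w j by blast
    have "tpow T (-n) x = (T^^nat (int j - n)) w" using x r tp_fun[of "-n" j w] by simp
    moreover have "nat (int j - n) < k" using r by auto
    ultimately show "tpow T (-n) x \<in> DW W k" using w by (auto simp: DW_def)
  }
  {
    assume "tpow T (-n) x \<in> DW W k"
    then obtain j w where j: "j < k" and w: "w \<in> W" and x: "tpow T (-n) x = (T^^j) w" by (auto simp: DW_def)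
    have r: "0 \<le> int j + n \<and> int j + n < int k" using Inv2D2[OF I nz w j x] .
    have "x = tpow T n (tpow T (-n) x)" by (simp add: tp)
    also have "\<dots> = (T^^nat (int j + n)) w" using x r tp_fun[of n j w] by (simp add: add.commute)
    finally have "x = (T^^nat (int j + n)) w" .
    moreover have "nat (int j + n) < k" using r by auto
    ultimately show "x \<in> DW W k" using w by (auto simp: DW_def)
  }
qed

end


lemma sum_ind_disj:
  fixes k :: nat
  assumes "\<And>l l'. l < k \<Longrightarrow> l' < k \<Longrightarrow> l \<noteq> l' \<Longrightarrow> A l \<inter> A l' = {}"
  shows "(\<Sum>l<k. ind (A l) x) = (ind (\<Union>l<k. A l) x :: 'k::comm_ring_1)"
  using assms
proof (induction k)
  case 0 then show ?case by (simp add: ind_def)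
next
  case (Suc k)
  have IH: "(\<Sum>l<k. ind (A l) x) = (ind (\<Union>l<k. A l) x :: 'k)" using Suc by auto
  have "A k \<inter> A l = {}" if "l < k" for l using Suc.prems[of k l] that by simp
  then have d: "A k \<inter> (\<Union>l<k. A l) = {}" by blast
  have "(\<Sum>l<Suc k. ind (A l) x) = ind (\<Union>l<k. A l) x + (ind (A k) x :: 'k)" using IH by simp
  also have "\<dots> = ind (\<Union>l<Suc k. A l) x"
    using d by (auto simp: ind_def lessThan_Suc)
  finally show ?case .
qed

context setting begin

lemma Wset_len_unique:
  assumes "set Zs \<subseteq> P" "set Zs' \<subseteq> P" "x \<in> Wset T E Zs" "x \<in> Wset T E Zs'"
  shows "length Zs = length Zs'"
proof -
  have aux: False if "set Zs1 \<subseteq> P" "set Zs2 \<subseteq> P" "x \<in> Wset T E Zs1" "x \<in> Wset T E Zs2"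
      "length Zs1 < length Zs2" for Zs1 Zs2
  proof -
    have "(T^^Suc (length Zs1)) x \<in> E" using that(3) by (simp add: Wset_def)
    moreover have "(T^^Suc (length Zs1)) x \<in> Zs2 ! length Zs1" using that(4,5) by (simp add: Wset_def)
    moreover have "Zs2 ! length Zs1 \<in> P" using that(2,5) by auto
    ultimately show False using P_E by blast
  qed
  show ?thesis
  proof (rule ccontr)
    assume "length Zs \<noteq> length Zs'"
    then consider "length Zs < length Zs'" | "length Zs' < length Zs" by linarith
    then show False
    proof cases
      case 1 show False by (rule aux[OF assms 1])
    next
      case 2 show False by (rule aux[OF assms(2,1,4,3) 2])
    qed
  qed
qed

lemma V_Wlen:
  assumes "W \<noteq> {}" "set Zs \<subseteq> P" "W = Wset T E Zs"
  shows "Wlen T E P W = Suc (length Zs)"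
  unfolding Wlen_def
proof (rule Least_equality)
  show "\<exists>Zs'. set Zs' \<subseteq> P \<and> W = Wset T E Zs' \<and> Suc (length Zs) = Suc (length Zs')"
    using assms by blast
next
  fix y assume "\<exists>Zs'. set Zs' \<subseteq> P \<and> W = Wset T E Zs' \<and> y = Suc (length Zs')"
  then obtain Zs' where Zs': "set Zs' \<subseteq> P" "W = Wset T E Zs'" "y = Suc (length Zs')" by blast
  obtain x where "x \<in> W" using assms(1) by blast
  then have "length Zs = length Zs'" using Wset_len_unique[OF assms(2) Zs'(1)] assms(3) Zs'(2) by blast
  then show "Suc (length Zs) \<le> y" using Zs'(3) by simp
qed

lemma V_Wpath:
  assumes W: "W \<in> Vsets T E P"
  shows "Wpath W (Wlen T E P W)"
proof -
  obtain Zs where Zs: "W \<noteq> {}" "set Zs \<subseteq> P" "W = Wset T E Zs" using W by (auto simp: Vsets_def)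
  have k: "Wlen T E P W = Suc (length Zs)" using V_Wlen[OF Zs] .
  have path: "(T^^j) w \<in> Zs ! (j - 1)" "Zs ! (j - 1) \<in> P"
    if w: "w \<in> W" and j0: "0 < j" and jk: "j < Suc (length Zs)" for w j
  proof -
    obtain i where j: "j = Suc i" using j0 gr0_conv_Suc by blast
    show "(T^^j) w \<in> Zs ! (j - 1)" using w jk Zs(3) j by (simp add: Wset_def)
    show "Zs ! (j - 1) \<in> P" using jk Zs(2) j by auto
  qed
  show ?thesis unfolding Wpath_def k
  proof (intro conjI ballI allI impI)
    show "W \<noteq> {}" by fact
    show "0 < Suc (length Zs)" by simp
    fix w assume w: "w \<in> W"
    show "w \<in> E" using w Zs(3) by (simp add: Wset_def)
    show "(T^^Suc (length Zs)) w \<in> E" using w Zs(3) by (simp add: Wset_def)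
    fix j assume "0 < j \<and> j < Suc (length Zs)"
    then show "(T^^j) w \<notin> E" using path[OF w] P_E by blast
  next
    fix j Z assume h: "0 < j \<and> j < Suc (length Zs) \<and> Z \<in> P"
    show "(\<forall>w\<in>W. (T^^j) w \<in> Z) \<or> (\<forall>w\<in>W. (T^^j) w \<notin> Z)"
    proof (cases "Z = Zs ! (j - 1)")
      case True then show ?thesis using path h by blast
    next
      case False
      have "\<forall>w\<in>W. (T^^j) w \<notin> Z" using path h False P_disj by metis
      then show ?thesis by blast
    qed
  qed
qed

lemma ind_star:
  "cp_star \<sigma> T (cpm (ind A) i) = cpm (ind (tpow T i -` A)) (-i)"
  by (simp add: cpm_star sigma0) (rule cpm_cong, simp add: ind_def sigma0 sigma1)

lemma ind_mult_cpm:
  "cp_mult T (cpm (ind A) i) (cpm (ind C) j) = (cpm (ind (A \<inter> tpow T (-i) -` C)) (i + j) :: ('x,'k) cp)"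
  by (simp add: cpm_mult) (rule cpm_cong, simp add: ind_def)

lemma tpow_vimage_cancel: "tpow T (-i) -` (tpow T i -` A) = A"
  by (auto simp: tp)

lemma ind_one_minus:
  "cp_add cp_one (cp_smult (-1) (cpm (ind A) 0)) = (cpm (ind (- A)) 0 :: ('x,'k) cp)"
  by (simp add: cp_one_cpm cpm_smult cpm_add) (rule cpm_cong, simp add: ind_def)

abbreviation sB :: "('x,'k) cp" where "sB \<equiv> cpm (ind (UNIV - E)) 1"

lemma s_in_B: "sB \<in> B"
proof -
  have "finite F \<Longrightarrow> F \<subseteq> P \<Longrightarrow> (cpm (ind (\<Union>F)) 1 :: ('x,'k) cp) \<in> B" for F
  proof (induction F rule: finite_induct)
    case empty
    have "(cpm (ind (\<Union>{})) 1 :: ('x,'k) cp) = cp_zero"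
      by (simp add: cp_zero_cpm[of 1]) (rule cpm_cong, simp add: ind_def)
    then show ?case using B_zero by simp
  next
    case (insert a F)
    have d: "a \<inter> \<Union>F = {}" using insert P_disj by blast
    have "cp_add (cpm (ind (\<Union>F)) 1) (cp_chit a) = (cpm (ind (\<Union>(insert a F))) 1 :: ('x,'k) cp)"
      unfolding cp_chit_cpm cpm_add by (rule cpm_cong) (use d in \<open>auto simp: ind_def\<close>)
    moreover have "cp_add (cpm (ind (\<Union>F)) 1) (cp_chit a) \<in> B"
      using insert by (intro subalgB.add subalgB.gen) auto
    ultimately show ?case by simp
  qed
  moreover have "\<Union>P = UNIV - E" using part by (simp add: is_partition_def)
  ultimately show ?thesis using P_finite by (metis order_refl)
qed

lemma chi_E_B: "(cpm (ind E) 0 :: ('x,'k) cp) \<in> B"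
proof -
  have "cp_mult T sB (cp_star \<sigma> T sB) = (cpm (ind (UNIV - E)) 0 :: ('x,'k) cp)"
    by (simp add: ind_star ind_mult_cpm tpow_vimage_cancel[of 1, simplified])
  then have "cp_add cp_one (cp_smult (-1) (cp_mult T sB (cp_star \<sigma> T sB))) = (cpm (ind E) 0 :: ('x,'k) cp)"
    by (simp add: ind_one_minus Compl_eq_Diff_UNIV[symmetric])
  moreover have "cp_add cp_one (cp_smult (-1) (cp_mult T sB (cp_star \<sigma> T sB))) \<in> B"
    using s_in_B by (intro subalgB.intros) auto
  ultimately show ?thesis by simp
qed

lemma chi_TE_B: "(cpm (ind (T -` E)) 0 :: ('x,'k) cp) \<in> B"
proof -
  have "cp_mult T (cp_star \<sigma> T sB) sB = (cpm (ind (T -` (UNIV - E))) 0 :: ('x,'k) cp)"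
    by (simp add: ind_star ind_mult_cpm tpow_1)
  then have "cp_add cp_one (cp_smult (-1) (cp_mult T (cp_star \<sigma> T sB) sB)) = (cpm (ind (T -` E)) 0 :: ('x,'k) cp)"
    by (simp add: ind_one_minus) (rule cpm_cong, auto simp: ind_def)
  moreover have "cp_add cp_one (cp_smult (-1) (cp_mult T (cp_star \<sigma> T sB) sB)) \<in> B"
    using s_in_B by (intro subalgB.intros) auto
  ultimately show ?thesis by simp
qed

lemma chi_Z_B: "Z \<in> P \<Longrightarrow> (cpm (ind Z) 0 :: ('x,'k) cp) \<in> B"
proof -
  assume Z: "Z \<in> P"
  have "cp_mult T (cp_chit Z) (cp_star \<sigma> T (cp_chit Z)) = (cpm (ind Z) 0 :: ('x,'k) cp)"
    by (simp add: cp_chit_cpm ind_star ind_mult_cpm tpow_vimage_cancel[of 1, simplified])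
  moreover have "cp_mult T (cp_chit Z) (cp_star \<sigma> T (cp_chit Z)) \<in> B"
    using Z by (intro subalgB.intros) auto
  ultimately show ?thesis by simp
qed

lemma diag_mult: "cp_mult T (cpm (ind A) 0) (cpm (ind C) 0) = (cpm (ind (A \<inter> C)) 0 :: ('x,'k) cp)"
  by (simp add: ind_mult_cpm)

lemma conj_s:
  assumes "C \<subseteq> UNIV - E" "(cpm (ind C) 0 :: ('x,'k) cp) \<in> B"
  shows "(cpm (ind (T -` C)) 0 :: ('x,'k) cp) \<in> B"
proof -
  have "cp_mult T (cp_mult T (cp_star \<sigma> T sB) (cpm (ind C) 0)) sB = (cpm (ind (T -` C)) 0 :: ('x,'k) cp)"
    by (simp add: ind_star ind_mult_cpm tpow_1) (rule cpm_cong, use assms(1) in \<open>auto simp: ind_def\<close>)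
  moreover have "cp_mult T (cp_mult T (cp_star \<sigma> T sB) (cpm (ind C) 0)) sB \<in> B"
    using s_in_B assms(2) by (intro subalgB.intros) auto
  ultimately show ?thesis by simp
qed

definition Aset :: "'x set list \<Rightarrow> 'x set" where
  "Aset Zs = {x. (\<forall>i<length Zs. (T^^i) x \<in> Zs ! i) \<and> (T^^length Zs) x \<in> E}"

lemma Aset_Cons: "Aset (Z # Zs) = Z \<inter> T -` Aset Zs"
proof (intro set_eqI iffI)
  fix x assume "x \<in> Aset (Z # Zs)"
  then have h: "\<forall>i<Suc (length Zs). (T^^i) x \<in> (Z#Zs)!i" "(T^^Suc (length Zs)) x \<in> E"
    by (simp_all add: Aset_def)
  have "x \<in> Z" using h(1)[rule_format, of 0] by simp
  moreover have "(T^^i) (T x) \<in> Zs!i" if "i < length Zs" for i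
    using h(1)[rule_format, of "Suc i"] that by (simp add: funpow_swap1)
  moreover have "(T^^length Zs) (T x) \<in> E" using h(2) by (simp add: funpow_swap1)
  ultimately show "x \<in> Z \<inter> T -` Aset Zs" by (simp add: Aset_def)
next
  fix x assume "x \<in> Z \<inter> T -` Aset Zs"
  then have h: "x \<in> Z" "\<forall>i<length Zs. (T^^i) (T x) \<in> Zs!i" "(T^^length Zs) (T x) \<in> E"
    by (simp_all add: Aset_def)
  have "(T^^i) x \<in> (Z#Zs)!i" if "i < Suc (length Zs)" for i
  proof (cases i)
    case 0 then show ?thesis by (simp add: h(1))
  next
    case (Suc i') then show ?thesis using h(2) that by (simp add: funpow_swap1)
  qed
  then show "x \<in> Aset (Z # Zs)" using h(3) by (simp add: Aset_def funpow_swap1)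
qed

lemma Aset_B: "set Zs \<subseteq> P \<Longrightarrow> (cpm (ind (T -` Aset Zs)) 0 :: ('x,'k) cp) \<in> B"
proof (induction Zs)
  case Nil
  have "Aset [] = E" by (simp add: Aset_def)
  then show ?case using chi_TE_B by simp
next
  case (Cons Z Zs)
  have Z: "Z \<in> P" using Cons by simp
  have "(cpm (ind (Z \<inter> T -` Aset Zs)) 0 :: ('x,'k) cp) \<in> B"
    using diag_mult[of Z "T -` Aset Zs"] chi_Z_B[OF Z] Cons by (metis subalgB.mult insert_subset list.set(2))
  moreover have "Z \<inter> T -` Aset Zs \<subseteq> UNIV - E" using Z P_E by blast
  ultimately have "(cpm (ind (T -` (Z \<inter> T -` Aset Zs))) 0 :: ('x,'k) cp) \<in> B" using conj_s by blast
  then show ?case by (simp only: Aset_Cons)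
qed

lemma chi_W_B:
  assumes W: "W \<in> Vsets T E P"
  shows "(cpm (ind W) 0 :: ('x,'k) cp) \<in> B"
proof -
  obtain Zs where Zs: "set Zs \<subseteq> P" "W = Wset T E Zs" using W by (auto simp: Vsets_def)
  have "W = E \<inter> T -` Aset Zs"
    using Zs(2) by (auto simp: Wset_def Aset_def funpow_swap1)
  then show ?thesis using diag_mult[of E "T -` Aset Zs"] chi_E_B Aset_B[OF Zs(1)]
    by (metis subalgB.mult)
qed

lemma pp_B:
  assumes W: "W \<in> Vsets T E P" and m: "m < Wlen T E P W"
  shows "(cpm (ind ((T^^m) ` W)) (int m) :: ('x,'k) cp) \<in> B"
  using m
proof (induction m)
  case 0 then show ?case using chi_W_B[OF W] by simp
next
  case (Suc m)
  have P: "Wpath W (Wlen T E P W)" using V_Wpath[OF W] .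
  have "(UNIV - E) \<inter> tpow T (-1) -` ((T^^m) ` W) = (T^^Suc m) ` W"
  proof
    show "(UNIV - E) \<inter> tpow T (-1) -` ((T^^m) ` W) \<subseteq> (T^^Suc m) ` W"
    proof
      fix x assume "x \<in> (UNIV - E) \<inter> tpow T (-1) -` ((T^^m) ` W)"
      then obtain w where "w \<in> W" "inv T x = (T^^m) w" by (auto simp: tpow_m1)
      then have "x = (T^^Suc m) w" by (metis T_inv_T(1) funpow.simps(2) o_apply)
      then show "x \<in> (T^^Suc m) ` W" using \<open>w \<in> W\<close> by blast
    qed
    show "(T^^Suc m) ` W \<subseteq> (UNIV - E) \<inter> tpow T (-1) -` ((T^^m) ` W)"
    proof
      fix x assume "x \<in> (T^^Suc m) ` W"
      then obtain w where w: "w \<in> W" "x = (T^^Suc m) w" by blast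
      have "x \<notin> E" using P w Suc.prems unfolding Wpath_def by blast
      moreover have "inv T x = (T^^m) w" using w by simp
      ultimately show "x \<in> (UNIV - E) \<inter> tpow T (-1) -` ((T^^m) ` W)" using w by (auto simp: tpow_m1)
    qed
  qed
  then have "cp_mult T sB (cpm (ind ((T^^m) ` W)) (int m)) = (cpm (ind ((T^^Suc m) ` W)) (int (Suc m)) :: ('x,'k) cp)"
    by (simp add: ind_mult_cpm add.commute)
  moreover have "cp_mult T sB (cpm (ind ((T^^m) ` W)) (int m)) \<in> B"
    using Suc s_in_B by (intro subalgB.mult) auto
  ultimately show ?case by simp
qed

lemma tpow_neg_funpow: "tpow T (- int m) ((T^^m) w) = w"
  using tp_fun[of "- int m" m w] by simp

lemma e_B:
  assumes W: "W \<in> Vsets T E P" and m: "m < Wlen T E P W" and l: "l < Wlen T E P W"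
  shows "(cpm (ind ((T^^m) ` W)) (int m - int l) :: ('x,'k) cp) \<in> B"
proof -
  have "(T^^m) ` W \<inter> tpow T (- int m) -` (tpow T (int l) -` (T^^l) ` W) = (T^^m) ` W"
    by (auto simp: tpow_neg_funpow tpow_nat)
  then have "cp_mult T (cpm (ind ((T^^m) ` W)) (int m)) (cp_star \<sigma> T (cpm (ind ((T^^l) ` W)) (int l)))
      = (cpm (ind ((T^^m) ` W)) (int m - int l) :: ('x,'k) cp)"
    by (simp add: ind_star ind_mult_cpm)
  moreover have "cp_mult T (cpm (ind ((T^^m) ` W)) (int m)) (cp_star \<sigma> T (cpm (ind ((T^^l) ` W)) (int l))) \<in> B"
    using pp_B[OF W m] pp_B[OF W l] by (intro subalgB.intros)
  ultimately show ?thesis by simp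
qed

lemma chiTl_B:
  assumes W: "W \<in> Vsets T E P" and l: "l < Wlen T E P W"
  shows "(cpm (ind ((T^^l) ` W)) 0 :: ('x,'k) cp) \<in> B"
  using e_B[OF W l l] by simp

lemma hW_eq:
  assumes W: "W \<in> Vsets T E P"
  shows "(hW T E P W :: ('x,'k) cp) = cpm (ind (DW W (Wlen T E P W))) 0"
proof -
  let ?k = "Wlen T E P W"
  have P: "Wpath W ?k" using V_Wpath[OF W] .
  have disj: "(T^^l) ` W \<inter> (T^^l') ` W = {}" if "l < ?k" "l' < ?k" "l \<noteq> l'" for l l'
    using seg_unique[OF P] that by blast
  show ?thesis
    unfolding hW_def cp_chi_cpm
    by (auto simp: cpm_def fun_eq_iff DW_def sum_ind_disj[OF disj])
qed

lemma hW_B: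
  assumes W: "W \<in> Vsets T E P"
  shows "(hW T E P W :: ('x,'k) cp) \<in> B"
proof -
  have "m \<le> Wlen T E P W \<Longrightarrow> ((\<lambda>n x. \<Sum>l<m. cp_chi ((T ^^ l) ` W) n x) :: ('x,'k) cp) \<in> B" for m
  proof (induction m)
    case 0 then show ?case using B_zero by (simp add: cp_zero_def)
  next
    case (Suc m)
    have "((\<lambda>n x. \<Sum>l<Suc m. cp_chi ((T ^^ l) ` W) n x) :: ('x,'k) cp)
       = cp_add (\<lambda>n x. \<Sum>l<m. cp_chi ((T ^^ l) ` W) n x) (cp_chi ((T ^^ m) ` W))"
      by (simp add: cp_add_def)
    moreover have "\<dots> \<in> B" using Suc chiTl_B[OF W, of m]
      by (intro subalgB.add) (auto simp: cp_chi_cpm)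
    ultimately show ?case by simp
  qed
  then show ?thesis unfolding hW_def by simp
qed

end


section \<open>additive closure\<close>

lemma add_closure_incl: "s \<in> S \<Longrightarrow> s \<in> add_closure S"
proof -
  assume "s \<in> S"
  then have "cp_add cp_zero s \<in> add_closure S" by (intro add_closure.intros)
  moreover have "cp_add cp_zero s = s" by (simp add: cp_add_def cp_zero_def)
  ultimately show ?thesis by simp
qed

lemma add_closure_add:
  assumes "a \<in> add_closure S" shows "c \<in> add_closure S \<Longrightarrow> cp_add a c \<in> add_closure S"
proof (induction rule: add_closure.induct)
  case zero
  have "cp_add a cp_zero = a" by (simp add: cp_add_def cp_zero_def)
  then show ?case using assms by simp
next
  case (step c s)
  have "cp_add a (cp_add c s) = cp_add (cp_add a c) s" by (simp add: cp_add_def add.assoc)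
  then show ?case using step by (simp add: add_closure.step)
qed

lemma add_closure_sub:
  assumes "S \<subseteq> C" "cp_zero \<in> C" "\<And>a b. a \<in> C \<Longrightarrow> b \<in> C \<Longrightarrow> cp_add a b \<in> C"
  shows "add_closure S \<subseteq> C"
proof
  fix a show "a \<in> add_closure S \<Longrightarrow> a \<in> C"
    by (induction rule: add_closure.induct) (use assms in auto)
qed

lemma add_closure_sum:
  fixes f :: "nat \<Rightarrow> ('x,'k::comm_ring_1) cp"
  assumes "\<And>l. l < m \<Longrightarrow> f l \<in> S"
  shows "(\<lambda>n x. \<Sum>l<m. f l n x) \<in> add_closure S"
  using assms
proof (induction m)
  case 0
  have "(\<lambda>n x. \<Sum>l<0. f l n x) = cp_zero" by (simp add: cp_zero_def)
  then show ?case by (simp add: add_closure.zero)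
next
  case (Suc m)
  have "(\<lambda>n x. \<Sum>l<Suc m. f l n x) = cp_add (\<lambda>n x. \<Sum>l<m. f l n x) (f m)"
    by (simp add: cp_add_def)
  then show ?case using Suc by (simp add: add_closure.step)
qed

context setting begin

abbreviation "V \<equiv> Vsets T E P"
abbreviation hh :: "'x set \<Rightarrow> ('x,'k) cp" where "hh W \<equiv> hW T E P W"
abbreviation "kk W \<equiv> Wlen T E P W"
abbreviation "DD W \<equiv> DW W (kk W)"

definition Iset :: "('x,'k) cp set" where
  "Iset = add_closure (\<Union>W\<in>V. {cp_mult T (hh W) b | b. b \<in> B})"

lemma h_left: "W \<in> V \<Longrightarrow> cp_mult T (hh W) b n x = ind (DD W) x * b n x"
  by (simp add: hW_eq[of W] cp_mult_cpm_left)

lemma h_comm: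
  assumes W: "W \<in> V" and b: "b \<in> B"
  shows "cp_mult T b (hh W) = cp_mult T (hh W) b"
proof (intro ext)
  fix n x
  have P: "Wpath W (kk W)" using V_Wpath[OF W] .
  have "b n x * ind (DD W) (tpow T (-n) x) = ind (DD W) x * b n x"
  proof (cases "b n x = 0")
    case True then show ?thesis by simp
  next
    case False then show ?thesis using B_D[OF P b False] by (simp add: ind_def)
  qed
  then show "cp_mult T b (hh W) n x = cp_mult T (hh W) b n x"
    using B_fin[OF b] by (simp add: hW_eq[OF W] cp_mult_cpm_right cp_mult_cpm_left)
qed

lemma h_assoc_left:
  assumes W: "W \<in> V" and r: "r \<in> B"
  shows "cp_mult T r (cp_mult T (hh W) b) = cp_mult T (hh W) (cp_mult T r b)"
proof (intro ext)
  fix n x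
  have P: "Wpath W (kk W)" using V_Wpath[OF W] .
  have t: "r i x * (ind (DD W) (tpow T (- i) x) * b (n - i) (tpow T (- i) x)) =
        ind (DD W) x * (r i x * b (n - i) (tpow T (- i) x))" for i
  proof (cases "r i x = 0")
    case True then show ?thesis by simp
  next
    case False then show ?thesis using B_D[OF P r False] by (simp add: ind_def)
  qed
  show "cp_mult T r (cp_mult T (hh W) b) n x = cp_mult T (hh W) (cp_mult T r b) n x"
    unfolding h_left[OF W]
    unfolding cp_mult_def h_left[OF W]
    by (simp add: t sum_distrib_left)
qed

lemma h_assoc_right:
  assumes W: "W \<in> V" and b: "b \<in> B"
  shows "cp_mult T (cp_mult T (hh W) b) r = cp_mult T (hh W) (cp_mult T b r)"
  using cp_mult_diag_assoc[OF B_fin[OF b]] by (simp add: hW_eq[OF W])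

lemma hb_B: "W \<in> V \<Longrightarrow> b \<in> B \<Longrightarrow> cp_mult T (hh W) b \<in> B"
  using hW_B by (simp add: subalgB.mult)

lemma I_sub_B: "Iset \<subseteq> B"
  unfolding Iset_def
  by (rule add_closure_sub) (auto simp: hb_B B_zero subalgB.add)

lemma cp_mult_zero_left: "cp_mult T cp_zero r = cp_zero"
  by (simp add: cp_mult_def cp_zero_def fun_eq_iff)

lemma I_ideal: "two_sided_ideal T B Iset"
proof -
  have sub: "Iset \<subseteq> B" by (rule I_sub_B)
  have zero: "cp_zero \<in> Iset" by (simp add: Iset_def add_closure.zero)
  have add: "cp_add a b \<in> Iset" if "a \<in> Iset" "b \<in> Iset" for a b
    using that add_closure_add unfolding Iset_def by blast
  have neg: "cp_smult (-1) a \<in> Iset" if "a \<in> Iset" for a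
    using that unfolding Iset_def
  proof (induction rule: add_closure.induct)
    case zero
    have "cp_smult (-1) cp_zero = (cp_zero :: ('x,'k) cp)" by (simp add: cp_smult_def cp_zero_def)
    then show ?case by (simp add: add_closure.zero)
  next
    case (step a s)
    obtain W b where s: "W \<in> V" "b \<in> B" "s = cp_mult T (hh W) b" using step by blast
    have "cp_smult (-1) s = cp_mult T (hh W) (cp_smult (-1) b)" using s by (simp add: cp_mult_smult_right)
    then have "cp_smult (-1) s \<in> (\<Union>W\<in>V. {cp_mult T (hh W) b | b. b \<in> B})"
      using s by (auto intro: subalgB.smult)
    moreover have "cp_smult (-1) (cp_add a s) = cp_add (cp_smult (-1) a) (cp_smult (-1) s)"
      by (simp add: cp_smult_def cp_add_def fun_eq_iff algebra_simps)
    ultimately show ?case using step by (simp add: add_closure.step)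
  qed
  have left: "cp_mult T r a \<in> Iset" if r: "r \<in> B" and "a \<in> Iset" for r a
    using that(2) unfolding Iset_def
  proof (induction rule: add_closure.induct)
    case zero then show ?case by (simp add: cp_mult_zero_right add_closure.zero)
  next
    case (step a s)
    obtain W b where s: "W \<in> V" "b \<in> B" "s = cp_mult T (hh W) b" using step by blast
    have "cp_mult T r s = cp_mult T (hh W) (cp_mult T r b)" using s h_assoc_left r by simp
    then have "cp_mult T r s \<in> (\<Union>W\<in>V. {cp_mult T (hh W) b | b. b \<in> B})"
      using s r by (auto intro: subalgB.mult)
    then show ?case using step by (simp add: add_closure.step cp_mult_add_right)
  qed
  have right: "cp_mult T a r \<in> Iset" if r: "r \<in> B" and "a \<in> Iset" for r a
    using that(2) unfolding Iset_def
  proof (induction rule: add_closure.induct)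
    case zero then show ?case by (simp add: cp_mult_zero_left add_closure.zero)
  next
    case (step a s)
    obtain W b where s: "W \<in> V" "b \<in> B" "s = cp_mult T (hh W) b" using step by blast
    have "cp_mult T s r = cp_mult T (hh W) (cp_mult T b r)" using s h_assoc_right by simp
    then have sr: "cp_mult T s r \<in> (\<Union>W\<in>V. {cp_mult T (hh W) b | b. b \<in> B})"
      using s r by (auto intro: subalgB.mult)
    have "a \<in> B" using step(1) I_sub_B unfolding Iset_def by blast
    moreover have "s \<in> B" using s hb_B by simp
    ultimately have "cp_mult T (cp_add a s) r = cp_add (cp_mult T a r) (cp_mult T s r)"
      using B_fin by (simp add: cp_mult_add_left)
    then show ?case using step sr by (simp add: add_closure.step)
  qed
  have "add_subgroup Iset" unfolding add_subgroup_def using zero add neg by blast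
  then show ?thesis unfolding two_sided_ideal_def left_ideal_def right_ideal_def
    using sub left right by blast
qed

end


context setting begin

lemma cp_mult_nz:
  fixes a :: "('x,'k) cp"
  assumes h: "cp_mult T a b n x \<noteq> 0"
  shows "\<exists>i. a i x \<noteq> 0 \<and> b (n - i) (tpow T (- i) x) \<noteq> 0"
proof -
  obtain i where "a i x * b (n - i) (tpow T (- i) x) \<noteq> 0"
    using sum_nonzero_ex[OF h[unfolded cp_mult_def]] by blast
  then show ?thesis by auto
qed



abbreviation chil :: "'x set \<Rightarrow> nat \<Rightarrow> ('x,'k) cp" where
  "chil W l \<equiv> cpm (ind ((T^^l) ` W)) 0"

definition Rset :: "'x set \<Rightarrow> nat \<Rightarrow> ('x,'k) cp set" where
  "Rset W l = {cp_mult T (chil W l) b | b. b \<in> B}"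

lemma chil_left: "cp_mult T (chil W l) b n x = ind ((T^^l) ` W) x * b n x"
  by (simp add: cp_mult_cpm_left)

lemma R_min:
  assumes W: "W \<in> V" and l: "l < kk W"
  shows "minimal_right_ideal T B (Rset W l)"
proof -
  let ?k = "kk W"
  have P: "Wpath W ?k" using V_Wpath[OF W] .
  have chiB: "chil W l \<in> B" using chiTl_B[OF W l] .
  have sub: "Rset W l \<subseteq> B" unfolding Rset_def using chiB by (auto intro: subalgB.mult)
  have zero: "cp_zero \<in> Rset W l" unfolding Rset_def
    by (intro CollectI exI[of _ cp_zero]) (simp add: cp_mult_zero_right B_zero)
  have add: "cp_add a b \<in> Rset W l" if "a \<in> Rset W l" "b \<in> Rset W l" for a b
    using that unfolding Rset_def
    by (auto simp: cp_mult_add_right[symmetric] intro: subalgB.add)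
  have neg: "cp_smult (-1) a \<in> Rset W l" if "a \<in> Rset W l" for a
    using that unfolding Rset_def
    by (auto simp: cp_mult_smult_right[symmetric] intro: subalgB.smult)
  have right: "cp_mult T a r \<in> Rset W l" if rB: "r \<in> B" and aR: "a \<in> Rset W l" for a r
  proof -
    obtain b where b: "b \<in> B" "a = cp_mult T (chil W l) b" using aR unfolding Rset_def by blast
    have "cp_mult T a r = cp_mult T (chil W l) (cp_mult T b r)"
      using b cp_mult_diag_assoc[OF B_fin[OF b(1)]] by simp
    then show ?thesis unfolding Rset_def using b rB by (auto intro: subalgB.mult)
  qed
  have RI: "right_ideal T B (Rset W l)"
    unfolding right_ideal_def add_subgroup_def using sub zero add neg right by blast
  have chi_one: "cp_mult T (chil W l) cp_one = chil W l"
    unfolding fun_eq_iff chil_left by (auto simp: cp_one_def cpm_def)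
  have chiR: "chil W l \<in> Rset W l" unfolding Rset_def
    by (intro CollectI exI[of _ cp_one]) (simp add: chi_one subalgB.one)
  obtain w0 where w0: "w0 \<in> W" using P by (auto simp: Wpath_def)
  have chinz: "chil W l \<noteq> cp_zero"
  proof
    assume "chil W l = cp_zero"
    then have "chil W l 0 ((T^^l) w0) = cp_zero 0 ((T^^l) w0)" by simp
    then show False using w0 by (simp add: cpm_def ind_def cp_zero_def)
  qed
  have nz: "Rset W l \<noteq> {cp_zero}" using chiR chinz by blast
  have mini: "J = {cp_zero} \<or> J = Rset W l" if J: "right_ideal T B J" "J \<subseteq> Rset W l" for J
  proof (cases "J = {cp_zero}")
    case True then show ?thesis by simp
  next
    case False
    have "cp_zero \<in> J" using J by (simp add: right_ideal_def add_subgroup_def)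
    then obtain a where aJ: "a \<in> J" and anz: "a \<noteq> cp_zero" using False by blast
    obtain b where b: "b \<in> B" "a = cp_mult T (chil W l) b" using aJ J(2) unfolding Rset_def by blast
    obtain n x where nx: "a n x \<noteq> 0" using anz by (auto simp: cp_zero_def fun_eq_iff)
    have aB: "a \<in> B" using b chiB by (simp add: subalgB.mult)
    have ax: "a p y = ind ((T^^l) ` W) y * b p y" for p y using b(2) chil_left by simp
    have "x \<in> (T^^l) ` W" using nx ax[of n x] by (auto simp: ind_def split: if_splits)
    then obtain w1 where w1: "w1 \<in> W" "x = (T^^l) w1" by blast
    have bnx: "b n x \<noteq> 0" using nx ax[of n x] by auto
    have I2: "Inv2 W ?k b" using B_Inv2[OF P b(1)] .
    have I3: "Inv3 W ?k b" using B_Inv3[OF P b(1)] .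
    have r: "0 \<le> int l - n \<and> int l - n < int ?k" using Inv2D1[OF I2] bnx w1 l by blast
    define m where "m = nat (int l - n)"
    have m: "n = int l - int m" "m < ?k" using r by (auto simp: m_def)
    define c where "c = b n ((T^^l) w1)"
    have c0: "c \<noteq> 0" using bnx w1 by (simp add: c_def)
    have cconst: "b n ((T^^l) w) = c" if "w \<in> W" for w
      using I3 l m(2) that w1(1) unfolding Inv3_def c_def m(1) by blast
    define r where "r = cp_smult (inverse c) (cpm (ind ((T^^m) ` W)) (int m - int l))"
    have rB: "r \<in> B" unfolding r_def using e_B[OF W m(2) l] by (rule subalgB.smult)
    have rr: "r = cpm (\<lambda>y. inverse c * ind ((T^^m) ` W) y) (int m - int l)"
      unfolding r_def by (simp add: cpm_smult)
    have ar: "cp_mult T a r = chil W l"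
    proof (intro ext)
      fix n' y
      have lhs: "cp_mult T a r n' y = a (n' - (int m - int l)) y *
          (inverse c * ind ((T^^m) ` W) (tpow T (- (n' - (int m - int l))) y))"
        unfolding rr by (subst cp_mult_cpm_right[OF B_fin[OF aB]]) simp
      show "cp_mult T a r n' y = chil W l n' y"
      proof (cases "y \<in> (T^^l) ` W")
        case False
        then show ?thesis using lhs ax by (simp add: ind_def cpm_def)
      next
        case True
        then obtain w where w: "w \<in> W" "y = (T^^l) w" by blast
        show ?thesis
        proof (cases "n' = 0")
          case True
          have p: "n' - (int m - int l) = n" using True m(1) by simp
          have p2: "- (n' - (int m - int l)) = int m - int l" using True by simp
          have q0: "tpow T (int m - int l) ((T^^l) w) = (T^^m) w"
            using tp_fun[of "int m - int l" l w] by simp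
          have mn: "- n = int m - int l" using m(1) by simp
          have q1: "tpow T (- n) ((T^^l) w) = (T^^m) w" by (simp only: mn q0)
          have "cp_mult T a r n' y = a n ((T^^l) w) * (inverse c * ind ((T^^m) ` W) ((T^^m) w))"
            using lhs by (simp only: p2 p w(2) q0 q1)
          also have "a n ((T^^l) w) = c" using ax[of n "(T^^l) w"] w cconst by (simp add: ind_def)
          finally show ?thesis using True w c0 by (simp add: ind_def cpm_def)
        next
          case False
          let ?p = "n' - (int m - int l)"
          have "a ?p y * (inverse c * ind ((T^^m) ` W) (tpow T (- ?p) y)) = 0"
          proof (cases "b ?p y = 0")
            case True then show ?thesis using ax by simp
          next
            case bnz: False
            have r2: "0 \<le> int l - ?p \<and> int l - ?p < int ?k"
              using Inv2D1[OF I2, of ?p l w] bnz w l by blast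
            have tpy: "tpow T (- ?p) y = (T^^nat (int l - ?p)) w"
              using w r2 tp_fun[of "- ?p" l w] by simp
            have "tpow T (- ?p) y \<notin> (T^^m) ` W"
            proof
              assume "tpow T (- ?p) y \<in> (T^^m) ` W"
              then obtain w'' where "w'' \<in> W" "tpow T (- ?p) y = (T^^m) w''" by blast
              then have "nat (int l - ?p) = m"
                using seg_unique[OF P w(1) _ _ m(2)] tpy r2 by (metis nat_less_iff)
              then show False using False r2 by (auto simp: nat_eq_iff)
            qed
            then show ?thesis by (simp add: ind_def)
          qed
          then show ?thesis using lhs False by (simp add: cpm_def)
        qed
      qed
    qed
    have chiJ: "chil W l \<in> J" using J(1) aJ rB ar unfolding right_ideal_def by metis
    have "Rset W l \<subseteq> J"
    proof
      fix z assume "z \<in> Rset W l"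
      then obtain b' where "b' \<in> B" "z = cp_mult T (chil W l) b'" unfolding Rset_def by blast
      then show "z \<in> J" using J(1) chiJ unfolding right_ideal_def by blast
    qed
    then show ?thesis using J(2) by blast
  qed
  show ?thesis unfolding minimal_right_ideal_def using RI nz mini by blast
qed

lemma socle_closed:
  "cp_zero \<in> socle T B" "a \<in> socle T B \<Longrightarrow> c \<in> socle T B \<Longrightarrow> cp_add a c \<in> socle T B"
  unfolding socle_def by (auto intro: add_closure.zero add_closure_add)

lemma hb_decomp:
  assumes W: "W \<in> V"
  shows "cp_mult T (hh W) b = (\<lambda>n x. \<Sum>l<kk W. cp_mult T (chil W l) b n x)"
proof (intro ext)
  fix n x
  have P: "Wpath W (kk W)" using V_Wpath[OF W] .
  have disj: "(T^^l) ` W \<inter> (T^^l') ` W = {}" if "l < kk W" "l' < kk W" "l \<noteq> l'" for l l'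
    using seg_unique[OF P] that by blast
  have "(\<Sum>l<kk W. cp_mult T (chil W l) b n x) = (\<Sum>l<kk W. ind ((T^^l) ` W) x) * b n x"
    by (simp add: chil_left sum_distrib_right)
  also have "\<dots> = ind (DD W) x * b n x" by (simp add: sum_ind_disj[OF disj] DW_def)
  finally show "cp_mult T (hh W) b n x = (\<Sum>l<kk W. cp_mult T (chil W l) b n x)"
    using h_left[OF W] by simp
qed

lemma I_sub_socle: "Iset \<subseteq> socle T B"
  unfolding Iset_def
proof (rule add_closure_sub)
  show "cp_zero \<in> socle T B" by (rule socle_closed)
  show "\<And>a b. a \<in> socle T B \<Longrightarrow> b \<in> socle T B \<Longrightarrow> cp_add a b \<in> socle T B" by (rule socle_closed)
  show "(\<Union>W\<in>V. {cp_mult T (hh W) b | b. b \<in> B}) \<subseteq> socle T B"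
  proof
    fix z assume "z \<in> (\<Union>W\<in>V. {cp_mult T (hh W) b | b. b \<in> B})"
    then obtain W b where W: "W \<in> V" "b \<in> B" "z = cp_mult T (hh W) b" by blast
    have "cp_mult T (chil W l) b \<in> \<Union>{I. minimal_left_ideal T B I \<or> minimal_right_ideal T B I}"
      if "l < kk W" for l
      using R_min[OF W(1) that] W(2) unfolding Rset_def by blast
    then have "(\<lambda>n x. \<Sum>l<kk W. cp_mult T (chil W l) b n x) \<in> socle T B"
      unfolding socle_def by (rule add_closure_sum)
    then show "z \<in> socle T B" using W hb_decomp by simp
  qed
qed

lemma DW_disj:
  assumes W: "W \<in> V" and W': "W' \<in> V" and x: "x \<in> DD W" "x \<in> DD W'"
  shows "W = W'"
proof -
  have P: "Wpath W (kk W)" using V_Wpath[OF W] .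
  have P': "Wpath W' (kk W')" using V_Wpath[OF W'] .
  obtain p w where pw: "p < kk W" "w \<in> W" "x = (T^^p) w" using x(1) by (auto simp: DW_def)
  obtain q w' where qw: "q < kk W'" "w' \<in> W'" "x = (T^^q) w'" using x(2) by (auto simp: DW_def)
  have aux: False if "Wpath W1 k1" "Wpath W2 k2" "w1 \<in> W1" "w2 \<in> W2" "p1 < q1" "q1 < k2"
    "(T^^p1) w1 = (T^^q1) w2" for W1 W2 k1 k2 w1 w2 p1 q1
  proof -
    have "(T^^q1) w2 = (T^^p1) ((T^^(q1 - p1)) w2)"
      using that(5) by (metis funpow_add le_add_diff_inverse less_imp_le o_apply)
    then have "w1 = (T^^(q1 - p1)) w2" using that(7) inj_Tn by (metis injD)
    moreover have "(T^^(q1 - p1)) w2 \<notin> E" using that(2,4,5,6) by (auto simp: Wpath_def)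
    moreover have "w1 \<in> E" using that(1,3) by (auto simp: Wpath_def)
    ultimately show False by simp
  qed
  have "p = q"
  proof (rule ccontr)
    assume "p \<noteq> q"
    then consider "p < q" | "q < p" by linarith
    then show False
    proof cases
      case 1 show False by (rule aux[OF P P' pw(2) qw(2) 1 qw(1)]) (use pw qw in simp)
    next
      case 2 show False by (rule aux[OF P' P qw(2) pw(2) 2 pw(1)]) (use pw qw in simp)
    qed
  qed
  then have ww: "w = w'" using pw qw inj_Tn by (metis injD)
  obtain Zs where Zs: "set Zs \<subseteq> P" "W = Wset T E Zs" using W by (auto simp: Vsets_def)
  obtain Zs' where Zs': "set Zs' \<subseteq> P" "W' = Wset T E Zs'" using W' by (auto simp: Vsets_def)
  have len: "length Zs = length Zs'" using Wset_len_unique[OF Zs(1) Zs'(1)] pw(2) qw(2) ww Zs(2) Zs'(2) by blast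
  have "Zs ! i = Zs' ! i" if "i < length Zs" for i
  proof -
    have "(T^^Suc i) w \<in> Zs ! i" using pw(2) Zs(2) that by (simp add: Wset_def)
    moreover have "(T^^Suc i) w \<in> Zs' ! i" using qw(2) ww Zs'(2) that len by (simp add: Wset_def)
    moreover have "Zs ! i \<in> P" "Zs' ! i \<in> P" using Zs(1) Zs'(1) that len by auto
    ultimately show ?thesis using P_disj by blast
  qed
  then have "Zs = Zs'" using len by (simp add: nth_equalityI)
  then show ?thesis using Zs(2) Zs'(2) by simp
qed

lemma direct_sum:
  assumes F: "finite F" "F \<subseteq> V" and c: "\<forall>W\<in>F. c W \<in> {cp_mult T (hh W) b | b. b \<in> B}"
    and s: "(\<lambda>n x. \<Sum>W\<in>F. c W n x) = cp_zero"
  shows "\<forall>W\<in>F. c W = cp_zero"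
proof
  fix W0 assume W0: "W0 \<in> F"
  have cW: "c W n x = ind (DD W) x * c W n x" if "W \<in> F" for W n x
  proof -
    have "c W \<in> {cp_mult T (hh W) b | b. b \<in> B}" using c that by (rule bspec)
    then obtain b where cb: "c W = cp_mult T (hh W) b" by auto
    have WV: "W \<in> V" using F that by blast
    have "c W n x = ind (DD W) x * b n x" using h_left[OF WV] cb by simp
    then show ?thesis by (simp add: ind_def)
  qed
  show "c W0 = cp_zero"
  proof (intro ext)
    fix n x
    show "c W0 n x = cp_zero n x"
    proof (cases "x \<in> DD W0")
      case False then show ?thesis using cW[OF W0, of n x] by (simp add: ind_def cp_zero_def)
    next
      case True
      have o: "c W n x = 0" if "W \<in> F - {W0}" for W
      proof -
        have "x \<notin> DD W" using DW_disj[of W W0 x] True that F(2) W0 by blast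
        then show ?thesis using cW[of W n x] that by (simp add: ind_def)
      qed
      have "0 = (\<Sum>W\<in>F. c W n x)" using s by (metis cp_zero_def)
      also have "\<dots> = c W0 n x + (\<Sum>W\<in>F - {W0}. c W n x)" using F(1) W0 by (simp add: sum.remove)
      also have "\<dots> = c W0 n x" using o by simp
      finally show ?thesis by (simp add: cp_zero_def)
    qed
  qed
qed

definition Mset :: "'x set \<Rightarrow> ('x,'k) cp set" where
  "Mset W = {cp_mult T (cp_mult T b (cp_chi W)) b' | b b'. b \<in> B \<and> b' \<in> B}"

lemma I_closed: "cp_zero \<in> Iset" "a \<in> Iset \<Longrightarrow> c \<in> Iset \<Longrightarrow> cp_add a c \<in> Iset"
  unfolding Iset_def by (auto intro: add_closure.zero add_closure_add)

lemma M_sub_I: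
  assumes W: "W \<in> V" shows "Mset W \<subseteq> Iset"
proof
  fix z assume "z \<in> Mset W"
  then obtain b b' where bb: "b \<in> B" "b' \<in> B" "z = cp_mult T (cp_mult T b (cp_chi W)) b'"
    unfolding Mset_def by blast
  have P: "Wpath W (kk W)" using V_Wpath[OF W] .
  have chiWB: "cp_chi W \<in> B" using chi_W_B[OF W] by (simp add: cp_chi_cpm)
  have bc: "cp_mult T b (cp_chi W) \<in> B" using bb(1) chiWB by (rule subalgB.mult)
  have zB: "z \<in> B" using bc bb by (simp add: subalgB.mult)
  have WD: "W \<subseteq> DD W" using P by (auto simp: DW_def Wpath_def intro!: bexI[of _ 0] image_eqI[of _ _ _])
  have s1: "x \<in> DD W" if "cp_mult T b (cp_chi W) i x \<noteq> 0" for i x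
  proof -
    have e: "cp_mult T b (cp_chi W) i x = b i x * ind W (tpow T (- i) x)"
      using B_fin[OF bb(1)] by (simp add: cp_chi_cpm cp_mult_cpm_right)
    then have "b i x \<noteq> 0" "tpow T (- i) x \<in> W" using that by (auto simp: ind_def split: if_splits)
    then show ?thesis using B_D[OF P bb(1)] WD by blast
  qed
  have s2: "x \<in> DD W" if "z n x \<noteq> 0" for n x
  proof -
    have nz: "cp_mult T (cp_mult T b (cp_chi W)) b' n x \<noteq> 0" using that bb(3) by simp
    obtain i where "cp_mult T b (cp_chi W) i x \<noteq> 0"
      using cp_mult_nz[OF nz] by blast
    then show ?thesis using s1 by blast
  qed
  have "z = cp_mult T (hh W) z"
  proof (intro ext)
    fix n x show "z n x = cp_mult T (hh W) z n x"
      using s2[of n x] h_left[OF W] by (auto simp: ind_def)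
  qed
  then have "z \<in> (\<Union>W\<in>V. {cp_mult T (hh W) b | b. b \<in> B})" using W zB by blast
  then show "z \<in> Iset" unfolding Iset_def by (rule add_closure_incl)
qed

lemma chil_in_M:
  assumes W: "W \<in> V" and l: "l < kk W" and b: "b \<in> B"
  shows "cp_mult T (chil W l) b \<in> Mset W"
proof -
  let ?el0 = "cpm (ind ((T^^l) ` W)) (int l - int 0) :: ('x,'k) cp"
  let ?e0l = "cpm (ind ((T^^0) ` W)) (int 0 - int l) :: ('x,'k) cp"
  have P: "Wpath W (kk W)" using V_Wpath[OF W] .
  have k0: "0 < kk W" using P by (simp add: Wpath_def)
  have B1: "?el0 \<in> B" using e_B[OF W l k0] .
  have B2: "?e0l \<in> B" using e_B[OF W k0 l] .
  have e1: "cp_mult T ?el0 (cp_chi W) = ?el0"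
    by (simp add: cp_chi_cpm ind_mult_cpm) (rule cpm_cong, auto simp: ind_def tpow_neg_funpow)
  have "cp_mult T (cp_mult T ?el0 (cp_chi W)) (cp_mult T ?e0l b) = cp_mult T (chil W l) b"
  proof (intro ext)
    fix n x
    have "tpow T (int l) (tpow T (- int l) x) = x" by (simp add: tp)
    then show "cp_mult T (cp_mult T ?el0 (cp_chi W)) (cp_mult T ?e0l b) n x = cp_mult T (chil W l) b n x"
      unfolding e1 by (auto simp: cp_mult_cpm_left ind_def tpow_neg_funpow tp)
  qed
  moreover have "cp_mult T (cp_mult T ?el0 (cp_chi W)) (cp_mult T ?e0l b) \<in> Mset W"
    unfolding Mset_def using B1 B2 b by (blast intro: subalgB.mult)
  ultimately show ?thesis by simp
qed

lemma socle_form2: "add_closure (\<Union>W\<in>V. add_closure (Mset W)) = Iset"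
proof
  show "add_closure (\<Union>W\<in>V. add_closure (Mset W)) \<subseteq> Iset"
  proof (rule add_closure_sub)
    show "(\<Union>W\<in>V. add_closure (Mset W)) \<subseteq> Iset"
    proof
      fix z assume "z \<in> (\<Union>W\<in>V. add_closure (Mset W))"
      then obtain W where W: "W \<in> V" "z \<in> add_closure (Mset W)" by blast
      have "add_closure (Mset W) \<subseteq> Iset"
        by (rule add_closure_sub) (use M_sub_I[OF W(1)] I_closed in auto)
      then show "z \<in> Iset" using W by blast
    qed
  qed (use I_closed in auto)
  show "Iset \<subseteq> add_closure (\<Union>W\<in>V. add_closure (Mset W))"
    unfolding Iset_def
  proof (rule add_closure_sub)
    show "(\<Union>W\<in>V. {cp_mult T (hh W) b | b. b \<in> B}) \<subseteq> add_closure (\<Union>W\<in>V. add_closure (Mset W))"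
    proof
      fix z assume "z \<in> (\<Union>W\<in>V. {cp_mult T (hh W) b | b. b \<in> B})"
      then obtain W b where W: "W \<in> V" "b \<in> B" "z = cp_mult T (hh W) b" by blast
      have "cp_mult T (chil W l) b \<in> (\<Union>W\<in>V. add_closure (Mset W))" if "l < kk W" for l
        using chil_in_M[OF W(1) that W(2)] W(1) add_closure_incl by blast
      then have "(\<lambda>n x. \<Sum>l<kk W. cp_mult T (chil W l) b n x) \<in> add_closure (\<Union>W\<in>V. add_closure (Mset W))"
        by (rule add_closure_sum)
      then show "z \<in> add_closure (\<Union>W\<in>V. add_closure (Mset W))" using W hb_decomp by simp
    qed
  qed (auto intro: add_closure.zero add_closure_add)
qed

end


locale setting_dense = setting T \<sigma> E P
  for T :: "'x::topological_space \<Rightarrow> 'x" and \<sigma> :: "'k::field \<Rightarrow> 'k" and E P +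
  assumes dense: "\<And>U. open U \<Longrightarrow> U \<noteq> {} \<Longrightarrow> \<exists>W\<in>Vsets T E P. U \<inter> DW W (Wlen T E P W) \<noteq> {}"
begin

lemma inj_pi:
  assumes b: "b \<in> B" and b': "b' \<in> B" and h: "\<forall>W\<in>V. cp_mult T (hh W) b = cp_mult T (hh W) b'"
  shows "b = b'"
proof (intro ext)
  fix n x0
  show "b n x0 = b' n x0"
  proof (rule ccontr)
    assume ne: "b n x0 \<noteq> b' n x0"
    have lc: "locally_constant (b n)" "locally_constant (b' n)"
      using B_carrier[OF b] B_carrier[OF b'] by (auto simp: carrier_iff)
    obtain U1 where U1: "open U1" "x0 \<in> U1" "\<forall>y\<in>U1. b n y = b n x0" using lc(1) unfolding locally_constant_def by blast
    obtain U2 where U2: "open U2" "x0 \<in> U2" "\<forall>y\<in>U2. b' n y = b' n x0" using lc(2) unfolding locally_constant_def by blast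
    have "open (U1 \<inter> U2)" "U1 \<inter> U2 \<noteq> {}" using U1 U2 by auto
    then obtain W where W: "W \<in> V" "U1 \<inter> U2 \<inter> DD W \<noteq> {}" using dense by blast
    then obtain y where y: "y \<in> U1" "y \<in> U2" "y \<in> DD W" by blast
    have "cp_mult T (hh W) b n y = cp_mult T (hh W) b' n y" using h W(1) by simp
    then have "b n y = b' n y" using h_left[OF W(1)] y(3) by (simp add: ind_def)
    moreover have "b n y = b n x0" using U1(3) y(1) by blast
    moreover have "b' n y = b' n x0" using U2(3) y(2) by blast
    ultimately show False using ne by simp
  qed
qed

lemma witness:
  assumes a: "a \<in> B" "a \<noteq> cp_zero"
  shows "\<exists>W\<in>V. cp_mult T (hh W) a \<noteq> cp_zero"
proof (rule ccontr)
  assume "\<not> (\<exists>W\<in>V. cp_mult T (hh W) a \<noteq> cp_zero)"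
  then have "\<forall>W\<in>V. cp_mult T (hh W) a = cp_mult T (hh W) cp_zero"
    by (simp add: cp_mult_zero_right)
  then have "a = cp_zero" using inj_pi[OF a(1) B_zero] by blast
  then show False using a(2) by simp
qed

lemma gen_in_I: "W \<in> V \<Longrightarrow> b \<in> B \<Longrightarrow> cp_mult T (hh W) b \<in> Iset"
  unfolding Iset_def by (rule add_closure_incl) blast

lemma essential: "essential_ideal T B Iset"
  unfolding essential_ideal_def
proof (intro conjI allI impI)
  show "two_sided_ideal T B Iset" by (rule I_ideal)
  fix J assume J: "two_sided_ideal T B J \<and> J \<noteq> {cp_zero}"
  have "cp_zero \<in> J" using J by (simp add: two_sided_ideal_def left_ideal_def add_subgroup_def)
  then obtain a where aJ: "a \<in> J" and anz: "a \<noteq> cp_zero" using J by blast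
  have aB: "a \<in> B" using aJ J by (auto simp: two_sided_ideal_def left_ideal_def)
  obtain W where W: "W \<in> V" "cp_mult T (hh W) a \<noteq> cp_zero" using witness[OF aB anz] by blast
  have "cp_mult T (hh W) a \<in> J" using J aJ hW_B[OF W(1)] by (auto simp: two_sided_ideal_def left_ideal_def)
  moreover have "cp_mult T (hh W) a \<in> Iset" using gen_in_I W(1) aB by blast
  ultimately show "Iset \<inter> J \<noteq> {cp_zero}" using W(2) by blast
qed

lemma I_addsub: "add_subgroup Iset"
  using I_ideal by (simp add: two_sided_ideal_def left_ideal_def)

lemma minL_sub: assumes L: "minimal_left_ideal T B L" shows "L \<subseteq> Iset"
proof -
  have LI: "left_ideal T B L" and Lnz: "L \<noteq> {cp_zero}" using L by (auto simp: minimal_left_ideal_def)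
  have "cp_zero \<in> L" using LI by (simp add: left_ideal_def add_subgroup_def)
  then obtain a where aL: "a \<in> L" and anz: "a \<noteq> cp_zero" using Lnz by blast
  have aB: "a \<in> B" using aL LI by (auto simp: left_ideal_def)
  obtain W where W: "W \<in> V" "cp_mult T (hh W) a \<noteq> cp_zero" using witness[OF aB anz] by blast
  have hL: "cp_mult T (hh W) a \<in> L" using LI aL hW_B[OF W(1)] by (auto simp: left_ideal_def)
  have hI: "cp_mult T (hh W) a \<in> Iset" using gen_in_I W(1) aB by blast
  have "left_ideal T B (L \<inter> Iset)"
    using LI I_ideal unfolding left_ideal_def two_sided_ideal_def add_subgroup_def by blast
  moreover have "L \<inter> Iset \<noteq> {cp_zero}" using hL hI W(2) by blast
  ultimately have "L \<inter> Iset = L" using L unfolding minimal_left_ideal_def by blast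
  then show ?thesis by blast
qed

lemma minR_sub: assumes R: "minimal_right_ideal T B R" shows "R \<subseteq> Iset"
proof -
  have RI: "right_ideal T B R" and Rnz: "R \<noteq> {cp_zero}" using R by (auto simp: minimal_right_ideal_def)
  have "cp_zero \<in> R" using RI by (simp add: right_ideal_def add_subgroup_def)
  then obtain a where aR: "a \<in> R" and anz: "a \<noteq> cp_zero" using Rnz by blast
  have aB: "a \<in> B" using aR RI by (auto simp: right_ideal_def)
  obtain W where W: "W \<in> V" "cp_mult T (hh W) a \<noteq> cp_zero" using witness[OF aB anz] by blast
  have "cp_mult T a (hh W) \<in> R" using RI aR hW_B[OF W(1)] by (auto simp: right_ideal_def)
  then have hR: "cp_mult T (hh W) a \<in> R" using h_comm[OF W(1) aB] by simp
  have hI: "cp_mult T (hh W) a \<in> Iset" using gen_in_I W(1) aB by blast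
  have "right_ideal T B (R \<inter> Iset)"
    using RI I_ideal unfolding right_ideal_def two_sided_ideal_def add_subgroup_def by blast
  moreover have "R \<inter> Iset \<noteq> {cp_zero}" using hR hI W(2) by blast
  ultimately have "R \<inter> Iset = R" using R unfolding minimal_right_ideal_def by blast
  then show ?thesis by blast
qed

lemma socle_eq: "socle T B = Iset"
proof
  show "socle T B \<subseteq> Iset" unfolding socle_def
    by (rule add_closure_sub) (use minL_sub minR_sub I_closed in blast)+
  show "Iset \<subseteq> socle T B" by (rule I_sub_socle)
qed

lemma main:
  "(\<forall>b\<in>B. \<forall>b'\<in>B. (\<forall>W\<in>V. cp_mult T (hh W) b = cp_mult T (hh W) b') \<longrightarrow> b = b')
     \<and> essential_ideal T B (add_closure (\<Union>W\<in>V. {cp_mult T (hh W) b | b. b \<in> B}))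
     \<and> socle T B = add_closure (\<Union>W\<in>V. {cp_mult T (hh W) b | b. b \<in> B})
     \<and> socle T B = add_closure (\<Union>W\<in>V.
          add_closure {cp_mult T (cp_mult T b (cp_chi W)) b' | b b'. b \<in> B \<and> b' \<in> B})
     \<and> (\<forall>F c. finite F \<and> F \<subseteq> V \<and> (\<forall>W\<in>F. c W \<in> {cp_mult T (hh W) b | b. b \<in> B}) \<and>
          (\<lambda>n x. \<Sum>W\<in>F. c W n x) = cp_zero \<longrightarrow> (\<forall>W\<in>F. c W = cp_zero))"
  using inj_pi essential socle_eq socle_form2 direct_sum
  unfolding Iset_def Mset_def by blast

end


lemma null_forward:
  fixes S :: "'x::topological_space \<Rightarrow> 'x" and M :: "'x measure"
  assumes bS: "bij S" and cS: "continuous_on UNIV S" and ciS: "continuous_on UNIV (inv S)"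
    and sM: "sets M = sets borel" and pM: "prob_space M"
    and iS: "\<And>A. closed A \<Longrightarrow> measure M (S -` A) = measure M A"
    and iS': "\<And>A. closed A \<Longrightarrow> measure M (inv S -` A) = measure M A"
    and erg: "\<And>A. A \<in> sets M \<Longrightarrow> S -` A = A \<Longrightarrow> measure M A = 0 \<or> measure M A = 1"
    and oE: "open E" and cE: "closed E" and pE: "measure M E > 0"
  shows "{x. \<forall>b. (S^^Suc b) x \<notin> E} \<in> null_sets M"
proof -
  interpret prob_space M by (rule pM)
  have sp: "space M = UNIV" using sets_eq_imp_space_eq[OF sM] by simp
  have cl: "A \<in> sets M" if "closed A" for A using sM borel_closed that by auto
  have op: "A \<in> sets M" if "open A" for A using sM borel_open that by auto
  have null_of: "A \<in> null_sets M" if "closed A" "measure M A = 0" for A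
    using that cl by (intro null_setsI) (auto simp: emeasure_eq_measure)
  have cSn: "continuous_on UNIV (S^^n)" for n using cont_funpow cS by blast
  have ciSn: "continuous_on UNIV (inv S^^n)" for n using cont_funpow ciS by blast
  define N where "N = {x. \<forall>b. (S^^Suc b) x \<notin> E}"
  have Neq: "N = (\<Inter>b. (S^^Suc b) -` (- E))" by (auto simp: N_def)
  have "closed ((S^^Suc b) -` (- E))" for b
    using closed_vimage[OF closed_Compl[OF oE] cSn] by blast
  then have Ncl: "closed N" unfolding Neq by (intro closed_INT) blast
  define A where "A = E \<inter> N"
  have Acl: "closed A" using cE Ncl by (simp add: A_def closed_Int)
  have mA: "measure M ((S^^n) -` A) = measure M A" for n
  proof (induction n)
    case 0 then show ?case by simp
  next
    case (Suc n)
    have eq: "(S^^Suc n) -` A = S -` ((S^^n) -` A)" by (auto simp: funpow_swap1)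
    have "closed ((S^^n) -` A)" using Acl cSn by (rule closed_vimage)
    then have "measure M (S -` ((S^^n) -` A)) = measure M ((S^^n) -` A)" by (rule iS)
    then show ?case using Suc by (simp only: eq)
  qed
  have disj: "disjoint_family (\<lambda>n. (S^^n) -` A)"
    unfolding disjoint_family_on_def
  proof (intro ballI impI)
    fix n m :: nat assume "n \<noteq> m"
    have aux: "(S^^n) -` A \<inter> (S^^m) -` A = {}" if "n < m" for n m
    proof -
      { fix x assume x: "x \<in> (S^^n) -` A" "x \<in> (S^^m) -` A"
        have mm: "m = Suc (m - n - 1) + n" using that by arith
        have "(S^^m) x = (S^^(Suc (m - n - 1) + n)) x" using mm by metis
        also have "\<dots> = (S^^Suc (m - n - 1)) ((S^^n) x)" by (simp only: funpow_add o_apply)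
        finally have "(S^^m) x = (S^^Suc (m - n - 1)) ((S^^n) x)" .
        moreover have "(S^^n) x \<in> N" "(S^^m) x \<in> E" using x by (auto simp: A_def)
        ultimately have False by (auto simp: N_def)
      }
      then show ?thesis by blast
    qed
    show "(S^^n) -` A \<inter> (S^^m) -` A = {}"
      using \<open>n \<noteq> m\<close> aux[of n m] aux[of m n] by (cases "n < m") (auto simp: Int_commute)
  qed
  have A0: "measure M A = 0"
  proof (rule ccontr)
    assume "measure M A \<noteq> 0"
    then have c: "measure M A > 0" using measure_nonneg[of M A] by linarith
    define K where "K = nat \<lceil>2 / measure M A\<rceil>"
    have "measure M (\<Union>n\<in>{..<K}. (S^^n) -` A) = (\<Sum>n<K. measure M ((S^^n) -` A))"
      by (rule finite_measure_finite_Union) (use disj cl closed_vimage[OF Acl cSn] in \<open>auto simp: disjoint_family_on_def\<close>)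
    also have "\<dots> = real K * measure M A" using mA by simp
    finally have "real K * measure M A \<le> 1" using prob_le_1 by metis
    moreover have "real K \<ge> 2 / measure M A" unfolding K_def by linarith
    then have "real K * measure M A \<ge> 2" using c by (simp add: field_simps)
    ultimately show False by simp
  qed
  define G where "G = (\<Union>n::int. tpow S n -` E)"
  have Gop: "open G" unfolding G_def using oE cont_tpow[OF cS ciS] by (auto intro!: open_UN open_vimage)
  have SG: "S -` G = G"
  proof -
    have "tpow S n (S x) = tpow S (n + 1) x" for n x
      using tpow_add[OF bS, of n 1 x] tpow_1[of S] by simp
    then have "x \<in> S -` G \<longleftrightarrow> x \<in> G" for x
      unfolding G_def by auto (metis diff_add_cancel)
    then show ?thesis by blast
  qed
  have EG: "E \<subseteq> G" unfolding G_def by (auto intro!: exI[of _ 0])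
  have "measure M E \<le> measure M G" using EG op[OF Gop] by (rule finite_measure_mono)
  then have "measure M G = 1" using erg[OF op[OF Gop] SG] pE by auto
  then have "measure M (UNIV - G) = 0" using prob_compl[OF op[OF Gop]] sp by simp
  then have nG: "UNIV - G \<in> null_sets M" using Gop by (intro null_of) (auto simp: closed_Diff)
  have mA': "measure M ((inv S^^a) -` A) = 0" for a
  proof (induction a)
    case 0 then show ?case using A0 by simp
  next
    case (Suc a)
    have eq: "(inv S^^Suc a) -` A = inv S -` ((inv S^^a) -` A)" by (auto simp: funpow_swap1)
    have "closed ((inv S^^a) -` A)" using Acl ciSn by (rule closed_vimage)
    then have "measure M (inv S -` ((inv S^^a) -` A)) = measure M ((inv S^^a) -` A)" by (rule iS')
    then show ?case using Suc by (simp only: eq)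
  qed
  have nU: "(\<Union>a. (inv S^^a) -` A) \<in> null_sets M"
    using mA' Acl ciSn by (intro null_sets_UN null_of closed_vimage) auto
  have sub: "N \<subseteq> (\<Union>a. (inv S^^a) -` A) \<union> (UNIV - G)"
  proof
    fix x assume xN: "x \<in> N"
    show "x \<in> (\<Union>a. (inv S^^a) -` A) \<union> (UNIV - G)"
    proof (cases "x \<in> G")
      case False then show ?thesis by blast
    next
      case True
      then obtain n where n: "tpow S n x \<in> E" unfolding G_def by blast
      have "n \<le> 0"
      proof (rule ccontr)
        assume "\<not> n \<le> 0"
        then have "tpow S n x = (S^^Suc (nat n - 1)) x"
          using tpow_nat[of S "Suc (nat n - 1)"] by simp
        then show False using xN n by (auto simp: N_def)
      qed
      then have ex: "\<exists>a. tpow S (- int a) x \<in> E" using n by (intro exI[of _ "nat (-n)"]) simp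
      define a0 where "a0 = (LEAST a. tpow S (- int a) x \<in> E)"
      have a0E: "tpow S (- int a0) x \<in> E" unfolding a0_def using ex by (rule LeastI_ex)
      have a0m: "tpow S (- int a) x \<notin> E" if "a < a0" for a
        using that not_less_Least unfolding a0_def by blast
      define y where "y = tpow S (- int a0) x"
      have "y \<in> N" unfolding N_def
      proof (intro CollectI allI)
        fix b
        have e: "(S^^Suc b) y = tpow S (int (Suc b) - int a0) x"
          unfolding y_def tpow_nat[symmetric] using tpow_add[OF bS] by simp
        show "(S^^Suc b) y \<notin> E"
        proof (cases "a0 < Suc b")
          case True
          then have ee: "int (Suc b) - int a0 = int (Suc (b - a0))" by simp
          have "tpow S (int (Suc b) - int a0) x = (S^^Suc (b - a0)) x"
            by (simp only: ee tpow_nat)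
          then show ?thesis using e xN by (simp add: N_def)
        next
          case False
          then have "tpow S (int (Suc b) - int a0) x = tpow S (- int (a0 - Suc b)) x"
            by (simp add: of_nat_diff)
          then show ?thesis using e a0m[of "a0 - Suc b"] False by simp
        qed
      qed
      then have "y \<in> A" using a0E by (simp add: A_def y_def)
      then have "x \<in> (inv S^^a0) -` A" by (simp add: y_def tpow_negnat)
      then show ?thesis by blast
    qed
  qed
  have "N \<in> null_sets M"
    using null_sets_subset[OF null_sets.Un[OF nU nG] cl[OF Ncl] sub] .
  then show ?thesis unfolding N_def .
qed



context setting begin

lemma cover:
  assumes x1: "\<exists>b. (T^^Suc b) x \<in> E" and x2: "\<exists>a. tpow T (- int a) x \<in> E"
  shows "\<exists>W\<in>V. x \<in> DD W"
proof -
  define a0 where "a0 = (LEAST a. tpow T (- int a) x \<in> E)"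
  define b0 where "b0 = (LEAST b. (T^^Suc b) x \<in> E)"
  have a0E: "tpow T (- int a0) x \<in> E" unfolding a0_def using x2 by (rule LeastI_ex)
  have a0m: "tpow T (- int a) x \<notin> E" if "a < a0" for a
    using that not_less_Least unfolding a0_def by blast
  have b0E: "(T^^Suc b0) x \<in> E" unfolding b0_def using x1 by (rule LeastI_ex)
  have b0m: "(T^^Suc b) x \<notin> E" if "b < b0" for b
    using that not_less_Least unfolding b0_def by blast
  define w where "w = tpow T (- int a0) x"
  define k where "k = a0 + Suc b0"
  have Tw: "(T^^j) w = tpow T (int j - int a0) x" for j
  proof -
    have "(T^^j) w = tpow T (int j) (tpow T (- int a0) x)" by (simp only: tpow_nat w_def)
    also have "\<dots> = tpow T (int j + - int a0) x" by (rule tp)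
    finally show ?thesis by (simp only: diff_conv_add_uminus)
  qed
  have notE: "(T^^j) w \<notin> E" if j: "0 < j" "j < k" for j
  proof (cases "j \<le> a0")
    case True
    then have ee: "int j - int a0 = - int (a0 - j)" by simp
    have lt: "a0 - j < a0" using True j by simp
    have "(T^^j) w = tpow T (- int (a0 - j)) x" using Tw[of j] by (simp only: ee)
    then show ?thesis using a0m[OF lt] by (simp only: not_False_eq_True)
  next
    case False
    then have ee: "int j - int a0 = int (Suc (j - a0 - 1))" by simp
    have "j - a0 - 1 < b0" using False j by (simp add: k_def)
    then have "(T^^Suc (j - a0 - 1)) x \<notin> E" by (rule b0m)
    then show ?thesis using Tw[of j] by (simp only: ee tpow_nat not_False_eq_True)
  qed
  have wE: "w \<in> E" using a0E by (simp add: w_def)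
  have kE: "(T^^k) w \<in> E"
  proof -
    have ee: "int k - int a0 = int (Suc b0)" by (simp add: k_def)
    show ?thesis using Tw[of k] b0E by (simp only: ee tpow_nat)
  qed
  define Zs where "Zs = map (\<lambda>j. SOME Z. Z \<in> P \<and> (T^^Suc j) w \<in> Z) [0..<k - 1]"
  have lenZs: "Suc (length Zs) = k" by (simp add: Zs_def k_def)
  have Zsi: "Zs ! i \<in> P \<and> (T^^Suc i) w \<in> Zs ! i" if "i < length Zs" for i
  proof -
    have "0 < Suc i" "Suc i < k" using that lenZs by auto
    then have "\<exists>Z. Z \<in> P \<and> (T^^Suc i) w \<in> Z" using notE P_cover by blast
    then have "(SOME Z. Z \<in> P \<and> (T^^Suc i) w \<in> Z) \<in> P \<and> (T^^Suc i) w \<in> (SOME Z. Z \<in> P \<and> (T^^Suc i) w \<in> Z)"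
      by (rule someI_ex)
    moreover have "Zs ! i = (SOME Z. Z \<in> P \<and> (T^^Suc i) w \<in> Z)" using that by (simp add: Zs_def)
    ultimately show ?thesis by simp
  qed
  have setZs: "set Zs \<subseteq> P" using Zsi by (auto simp: in_set_conv_nth)
  have wW: "w \<in> Wset T E Zs"
    unfolding Wset_def using wE Zsi kE lenZs by auto
  define W where "W = Wset T E Zs"
  have Wne: "W \<noteq> {}" using wW W_def by blast
  have WV: "W \<in> V" unfolding Vsets_def using Wne setZs W_def by blast
  have kW: "kk W = k" using V_Wlen[OF Wne setZs W_def] lenZs by simp
  have "x = (T^^a0) w" using Tw[of a0] by simp
  moreover have "a0 < k" by (simp add: k_def)
  ultimately have "x \<in> DD W" unfolding kW DW_def using wW W_def by blast
  then show ?thesis using WV by blast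
qed

end

theorem proposition3p12:
  fixes T :: "'x::metric_space \<Rightarrow> 'x"
    and \<mu> :: "'x measure"
    and \<sigma> :: "'k::field \<Rightarrow> 'k"
    and E :: "'x set" and P :: "'x set set"
  assumes "infinite (UNIV :: 'x set)"
    and "totally_disconnected_space TYPE('x)"
    and "compact (UNIV :: 'x set)"
    and "is_homeo T"
    and "sets \<mu> = sets borel" and "prob_space \<mu>"
    and "full_measure \<mu>" and "invariant_measure T \<mu>" and "ergodic_measure T \<mu>"
    and "field_involution \<sigma>"
    and "clopen_set E" and "E \<noteq> {}"
    and "is_partition P (UNIV - E)"
  defines "B \<equiv> subalgB \<sigma> T P"
    and "V \<equiv> Vsets T E P"
    and "h \<equiv> hW T E P"
  shows
    \<comment> \<open>\<pi>(b) = (h_W b)_W is injective on B \<close>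
    "(\<forall>b\<in>B. \<forall>b'\<in>B. (\<forall>W\<in>V. cp_mult T (h W) b = cp_mult T (h W) b') \<longrightarrow> b = b')
     \<and> essential_ideal T B (add_closure (\<Union>W\<in>V. {cp_mult T (h W) b | b. b \<in> B}))
     \<and> socle T B = add_closure (\<Union>W\<in>V. {cp_mult T (h W) b | b. b \<in> B})
     \<and> socle T B = add_closure (\<Union>W\<in>V.
          add_closure {cp_mult T (cp_mult T b (cp_chi W)) b' | b b'. b \<in> B \<and> b' \<in> B})
     \<comment> \<open>the sum is direct\<close>
     \<and> (\<forall>F c. finite F \<and> F \<subseteq> V \<and> (\<forall>W\<in>F. c W \<in> {cp_mult T (h W) b | b. b \<in> B}) \<and>
          (\<lambda>n x. \<Sum>W\<in>F. c W n x) = cp_zero \<longrightarrow> (\<forall>W\<in>F. c W = cp_zero))"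
proof -
  have bijT: "bij T" and cT: "continuous_on UNIV T" and ciT: "continuous_on UNIV (inv T)"
    using assms(4) by (auto simp: is_homeo_def)
  interpret setting T \<sigma> E P
    by unfold_locales (use bijT cT ciT assms(10,11,13) in auto)
  have sM: "sets \<mu> = sets borel" by (rule assms(5))
  interpret prob_space \<mu> by (rule assms(6))
  have cl: "A \<in> sets \<mu>" if "closed A" for A using sM borel_closed that by auto
  have op: "A \<in> sets \<mu>" if "open A" for A using sM borel_open that by auto
  have oE: "open E" and cE: "closed E" using assms(11) by (auto simp: clopen_set_def)
  have pE: "measure \<mu> E > 0" using assms(7,12) oE by (auto simp: full_measure_def)
  have iT: "measure \<mu> (T -` A) = measure \<mu> A" if "closed A" for A
    using assms(8) cl[OF that] by (auto simp: invariant_measure_def)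
  have iT': "measure \<mu> (inv T -` A) = measure \<mu> A" if "closed A" for A
  proof -
    have e1: "inv T -` A = T ` A" using bijT by (auto simp: image_iff) (metis T_inv_T(1))
    have "closed (inv T -` A)" using that ciT by (rule closed_vimage)
    then have "measure \<mu> (T -` (T ` A)) = measure \<mu> (T ` A)" using iT e1 by metis
    moreover have "T -` (T ` A) = A" using bijT by (auto simp: bij_is_inj inj_vimage_image_eq)
    ultimately show ?thesis using e1 by simp
  qed
  have ergT: "measure \<mu> A = 0 \<or> measure \<mu> A = 1" if "A \<in> sets \<mu>" "T -` A = A" for A
    using assms(9) that by (auto simp: ergodic_measure_def)
  have ergiT: "measure \<mu> A = 0 \<or> measure \<mu> A = 1" if "A \<in> sets \<mu>" "inv T -` A = A" for A
  proof -
    have "T -` A = A"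
    proof (intro set_eqI)
      fix x
      have "T x \<in> A \<longleftrightarrow> inv T (T x) \<in> A" using that(2) by blast
      then show "x \<in> T -` A \<longleftrightarrow> x \<in> A" by simp
    qed
    then show ?thesis using ergT that(1) by blast
  qed
  have N1: "{x. \<forall>b. (T^^Suc b) x \<notin> E} \<in> null_sets \<mu>"
    by (rule null_forward[OF bijT cT ciT sM assms(6) iT iT' ergT oE cE pE])
  have biT: "bij (inv T)" using bijT by (rule bij_imp_bij_inv)
  have iiT: "inv (inv T) = T" using bijT by (rule inv_inv_eq)
  have N2: "{x. \<forall>b. (inv T^^Suc b) x \<notin> E} \<in> null_sets \<mu>"
    by (rule null_forward[OF biT ciT _ sM assms(6) iT' _ ergiT oE cE pE]) (simp_all add: iiT cT iT)
  have N2': "{x. \<forall>a. tpow T (- int a) x \<notin> E} \<subseteq> {x. \<forall>b. (inv T^^Suc b) x \<notin> E}"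
  proof (intro subsetI CollectI allI)
    fix x b assume "x \<in> {x. \<forall>a. tpow T (- int a) x \<notin> E}"
    then have "tpow T (- int (Suc b)) x \<notin> E" by blast
    then show "(inv T^^Suc b) x \<notin> E" by (metis tpow_negnat)
  qed
  have dense: "\<exists>W\<in>Vsets T E P. U \<inter> DW W (Wlen T E P W) \<noteq> {}" if U: "open U" "U \<noteq> {}" for U
  proof (rule ccontr)
    assume "\<not> ?thesis"
    then have none: "\<And>x. x \<in> U \<Longrightarrow> \<not> (\<exists>W\<in>Vsets T E P. x \<in> DW W (Wlen T E P W))" by blast
    have "U \<subseteq> {x. \<forall>b. (T^^Suc b) x \<notin> E} \<union> {x. \<forall>b. (inv T^^Suc b) x \<notin> E}"
      using none cover N2' by blast
    then have "U \<in> null_sets \<mu>"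
      using null_sets_subset[OF null_sets.Un[OF N1 N2] op[OF U(1)]] by blast
    then have "measure \<mu> U = 0" by (rule measure_eq_0_null_sets)
    moreover have "measure \<mu> U > 0" using assms(7) U by (auto simp: full_measure_def)
    ultimately show False by simp
  qed
  interpret setting_dense T \<sigma> E P
    by unfold_locales (rule dense)
  show ?thesis unfolding B_def V_def h_def by (rule main)
qed


end
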